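(* Let $D\ge1$, $q\ge2$, consider the Hamming scheme $\mathrm H(D,q)$ on $X=\mathcal Q^D$, and let $x=(0,\dots,0)$. Let $Y\subseteq X$ with $1<|Y|<|X|$, $\chi=\chi_Y$, $\delta_x=\delta_x(\chi)$, $\delta^*=\delta^*(\chi)$. Suppose $t\in\{1,\dots,D\}$ is such that for every $1\le r\le t$ at least one of $$|\{r\le j\le D-r:E_j\chi\ne0\}|\le\delta_x-r,\qquad |\{r\le i\le D-r:E_i^*(x)\chi\ne0\}|\le\delta^*-r$$ holds. Then for every $0\le k\le D$, the number of words $y\in Y$ of Hamming weight $k$ whose support is disjoint from a given $t$-subset $S\subseteq\{1,\dots,D\}$ does not depend on $S$; consequently, the supports of the words of weight $k$ in $Y$ (counted with multiplicity) form a $t$-design on the point set $\{1,\dots,D\}$ (whenever there is at least one such word). In particular this holds without assuming $Y$ is linear.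
   Context: $\mathcal Q=\{0,\dots,q-1\}$. The Hamming scheme $\mathrm H(D,q)$ has relations $R_i=\{(u,v):u,v\text{ differ in exactly }i\text{ coordinates}\}$, associate matrices $A_i$, and primitive idempotents $E_0=|X|^{-1}J,E_1,\dots,E_D$ in the standard (Krawtchouk) cometric ordering. $V=\mathbb C^X$, $\chi_Y=\sum_{y\in Y}\hat y$. $E_i^*(x)$ is the diagonal matrix with $(E_i^*(x))_{yy}=1$ if $y$ differs from $x$ in exactly $i$ coordinates and $0$ otherwise. $\delta_x(\chi)=\min\{i\ne0:E_i^*(x)\chi\ne0\}$, $\delta^*(\chi)=\min\{j\ne0:E_j\chi\ne0\}$. The support of a word is the set of its nonzero coordinates. A (multiset) family of $k$-subsets of a $D$-set is a $t$-design if every $t$-subset is contained in the same number of members. *)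

theory Defs
  imports Complex_Main
begin

text \<open>Words of the Hamming scheme H(D,q): functions on coordinates 0..D-1 with
  values in {0..q-1}, extended by 0 outside the coordinate range.\<close>
definition hamming_space :: "nat \<Rightarrow> nat \<Rightarrow> (nat \<Rightarrow> nat) set" where
  "hamming_space D q = {u. (\<forall>i<D. u i < q) \<and> (\<forall>i\<ge>D. u i = 0)}"

definition hdist :: "nat \<Rightarrow> (nat \<Rightarrow> nat) \<Rightarrow> (nat \<Rightarrow> nat) \<Rightarrow> nat" where
  "hdist D u v = card {i. i < D \<and> u i \<noteq> v i}"

definition word_support :: "nat \<Rightarrow> (nat \<Rightarrow> nat) \<Rightarrow> nat set" where
  "word_support D u = {i. i < D \<and> u i \<noteq> 0}"

definition hweight :: "nat \<Rightarrow> (nat \<Rightarrow> nat) \<Rightarrow> nat" where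
  "hweight D u = card (word_support D u)"

definition krawtchouk :: "nat \<Rightarrow> nat \<Rightarrow> nat \<Rightarrow> nat \<Rightarrow> complex" where
  "krawtchouk D q j i =
     (\<Sum>h=0..j. (-1) ^ h * (of_nat q - 1) ^ (j - h) * of_nat (i choose h) * of_nat ((D - i) choose (j - h)))"

text \<open>Primitive idempotent E_j (Krawtchouk/cometric ordering):
  E_j = |X|^{-1} sum_i K_j(i) A_i, applied to a vector f in C^X.\<close>
definition prim_idem :: "nat \<Rightarrow> nat \<Rightarrow> nat \<Rightarrow> ((nat \<Rightarrow> nat) \<Rightarrow> complex) \<Rightarrow> ((nat \<Rightarrow> nat) \<Rightarrow> complex)" where
  "prim_idem D q j f = (\<lambda>u. if u \<in> hamming_space D q then
      (1 / of_nat (q ^ D)) * (\<Sum>v\<in>hamming_space D q. krawtchouk D q j (hdist D u v) * f v)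
    else 0)"

definition dual_idem :: "nat \<Rightarrow> nat \<Rightarrow> (nat \<Rightarrow> nat) \<Rightarrow> nat \<Rightarrow> ((nat \<Rightarrow> nat) \<Rightarrow> complex) \<Rightarrow> ((nat \<Rightarrow> nat) \<Rightarrow> complex)" where
  "dual_idem D q x i f = (\<lambda>y. if y \<in> hamming_space D q \<and> hdist D x y = i then f y else 0)"

definition char_vec :: "nat \<Rightarrow> nat \<Rightarrow> (nat \<Rightarrow> nat) set \<Rightarrow> ((nat \<Rightarrow> nat) \<Rightarrow> complex)" where
  "char_vec D q Y = (\<lambda>y. if y \<in> hamming_space D q \<and> y \<in> Y then 1 else 0)"

definition delta_x :: "nat \<Rightarrow> nat \<Rightarrow> (nat \<Rightarrow> nat) \<Rightarrow> ((nat \<Rightarrow> nat) \<Rightarrow> complex) \<Rightarrow> nat" where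
  "delta_x D q x f = (LEAST i. i \<noteq> 0 \<and> i \<le> D \<and> dual_idem D q x i f \<noteq> (\<lambda>_. 0))"

definition delta_star :: "nat \<Rightarrow> nat \<Rightarrow> ((nat \<Rightarrow> nat) \<Rightarrow> complex) \<Rightarrow> nat" where
  "delta_star D q f = (LEAST j. j \<noteq> 0 \<and> j \<le> D \<and> prim_idem D q j f \<noteq> (\<lambda>_. 0))"

definition is_t_design :: "nat set \<Rightarrow> nat \<Rightarrow> 'b set \<Rightarrow> ('b \<Rightarrow> nat set) \<Rightarrow> bool" where
  "is_t_design P t B blk =
     (\<forall>T T'. T \<subseteq> P \<and> card T = t \<and> T' \<subseteq> P \<and> card T' = t \<longrightarrow>
        card {b\<in>B. T \<subseteq> blk b} = card {b\<in>B. T' \<subseteq> blk b})"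

end

theory Submission
  imports Defs "HOL-Library.FuncSet"
begin

definition sw :: "nat \<Rightarrow> nat \<Rightarrow> nat \<Rightarrow> nat" where
  "sw a b x = (if x = a then b else if x = b then a else x)"

definition swS :: "nat \<Rightarrow> nat \<Rightarrow> nat set \<Rightarrow> nat set" where
  "swS a b A = sw a b ` A"

lemma sw_sw[simp]: "sw a b (sw a b x) = x"
  by (simp add: sw_def)

lemma sw_inj: "inj (sw a b)"
  by (metis injI sw_sw)

lemma mem_swS: "x \<in> swS a b A \<longleftrightarrow> sw a b x \<in> A"
  unfolding swS_def by (metis image_iff sw_sw)

lemma swS_swS[simp]: "swS a b (swS a b A) = A"
  by (auto simp: mem_swS)

lemma swS_comm_args: "swS b a = swS a b"
  by (rule ext) (auto simp: swS_def sw_def)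

lemma card_swS[simp]: "card (swS a b A) = card A"
  unfolding swS_def by (simp add: card_image inj_on_subset[OF sw_inj])

lemma swS_sub: "a \<in> S \<Longrightarrow> b \<in> S \<Longrightarrow> A \<subseteq> S \<Longrightarrow> swS a b A \<subseteq> S"
  by (auto simp: mem_swS sw_def split: if_splits)

lemma sw_in: "a \<in> S \<Longrightarrow> b \<in> S \<Longrightarrow> x \<in> S \<Longrightarrow> sw a b x \<in> S"
  by (auto simp: sw_def)

lemma swS_Pow: "a \<in> S \<Longrightarrow> b \<in> S \<Longrightarrow> A \<in> Pow S \<Longrightarrow> swS a b A \<in> Pow S"
  using swS_sub by auto

lemma swS_fix: "(a \<in> A \<longleftrightarrow> b \<in> A) \<Longrightarrow> swS a b A = A"
  by (auto simp: mem_swS sw_def split: if_splits)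

lemma sw_comm: "a \<noteq> c \<Longrightarrow> a \<noteq> d \<Longrightarrow> b \<noteq> c \<Longrightarrow> b \<noteq> d \<Longrightarrow>
   sw a b (sw c d x) = sw c d (sw a b x)"
  by (simp add: sw_def)

lemma swS_comm: "a \<noteq> c \<Longrightarrow> a \<noteq> d \<Longrightarrow> b \<noteq> c \<Longrightarrow> b \<noteq> d \<Longrightarrow>
   swS a b (swS c d A) = swS c d (swS a b A)"
  by (auto simp: mem_swS sw_comm)

lemma swS_insert: "swS a b (insert x A) = insert (sw a b x) (swS a b A)"
  by (simp add: swS_def)

lemma swS_remove: "swS a b (A - {x}) = swS a b A - {sw a b x}"
  by (auto simp: mem_swS)

lemma bij_swS_Pow: "a \<in> S \<Longrightarrow> b \<in> S \<Longrightarrow> bij_betw (swS a b) (Pow S) (Pow S)"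
  by (rule bij_betw_byWitness[where f'="swS a b"]) (auto simp: swS_Pow mem_swS sw_def split: if_splits)

lemma bij_sw: "a \<in> S \<Longrightarrow> b \<in> S \<Longrightarrow> bij_betw (sw a b) S S"
  by (rule bij_betw_byWitness[where f'="sw a b"]) (auto simp: sw_def)

lemma prod_bool_split:
  fixes g :: "nat \<Rightarrow> bool \<Rightarrow> 'c::comm_monoid_mult"
  assumes "finite S" "B \<subseteq> S"
  shows "(\<Prod>i\<in>S. g i (i \<in> B)) = (\<Prod>i\<in>B. g i True) * (\<Prod>i\<in>S - B. g i False)"
proof -
  have "(\<Prod>i\<in>S. g i (i \<in> B)) = (\<Prod>i\<in>S. if i \<in> B then g i True else g i False)"
    by (rule prod.cong) auto
  also have "\<dots> = (\<Prod>i\<in>S \<inter> {i. i \<in> B}. g i True) * (\<Prod>i\<in>S \<inter> - {i. i \<in> B}. g i False)"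
    by (rule prod.If_cases) (rule assms)
  also have "S \<inter> {i. i \<in> B} = B" using assms by auto
  also have "S \<inter> - {i. i \<in> B} = S - B" by auto
  finally show ?thesis .
qed

lemma sum_pow_prod:
  fixes g :: "nat \<Rightarrow> bool \<Rightarrow> 'c::comm_semiring_1"
  assumes "finite S"
  shows "(\<Sum>B\<in>Pow S. \<Prod>i\<in>S. g i (i \<in> B)) = (\<Prod>i\<in>S. g i True + g i False)"
  using prod_add[OF assms, of "\<lambda>i. g i True" "\<lambda>i. g i False"] assms
  by (simp add: prod_bool_split finite_subset)

locale hm =
  fixes D q :: nat
  assumes q2: "2 \<le> q"
begin

abbreviation "U \<equiv> {0..<D}"
abbreviation "Qc \<equiv> (of_nat q :: complex)"

lemma Qc_nz: "Qc \<noteq> 0" using q2 by simp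

definition om :: "bool \<Rightarrow> bool \<Rightarrow> complex" where
  "om x y = (if y then (if x then -1 else Qc - 1) else 1)"

definition ww :: "nat set \<Rightarrow> nat set \<Rightarrow> complex" where
  "ww A B = (\<Prod>i\<in>U. om (i \<in> A) (i \<in> B))"

definition TT :: "(nat set \<Rightarrow> complex) \<Rightarrow> nat set \<Rightarrow> complex" where
  "TT F B = (\<Sum>A\<in>Pow U. F A * ww A B)"

definition AA :: "(nat set \<Rightarrow> complex) \<Rightarrow> nat set \<Rightarrow> complex" where
  "AA F A = (\<Sum>l\<in>U. if l \<in> A then (Qc - 1) * F (A - {l}) + (Qc - 2) * F A else F (insert l A))"

definition th :: "nat \<Rightarrow> complex" where
  "th j = (Qc - 1) * of_nat D - Qc * of_nat j"

lemma th_inj: "th i = th j \<Longrightarrow> i = j"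
  using Qc_nz by (simp add: th_def)

lemma TT_cong: "(\<And>A. A \<in> Pow U \<Longrightarrow> F A = G A) \<Longrightarrow> TT F = TT G"
  unfolding TT_def by (intro ext sum.cong) auto

lemma AA_cong: assumes "\<And>A. A \<in> Pow U \<Longrightarrow> F A = G A" "A \<in> Pow U" shows "AA F A = AA G A"
  unfolding AA_def
proof (intro sum.cong refl)
  fix l assume l: "l \<in> U"
  have "A - {l} \<in> Pow U" "insert l A \<in> Pow U" using l assms(2) by auto
  then show "(if l \<in> A then (Qc - 1) * F (A - {l}) + (Qc - 2) * F A else F (insert l A)) =
    (if l \<in> A then (Qc - 1) * G (A - {l}) + (Qc - 2) * G A else G (insert l A))"
    using assms by simp
qed

lemma TT_lin: "TT (\<lambda>A. F A - c * G A) B = TT F B - c * TT G B"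
  unfolding TT_def by (simp add: algebra_simps sum_subtractf sum_distrib_left)

lemma TT_diff: "TT (\<lambda>A. F A - G A) B = TT F B - TT G B"
  unfolding TT_def by (simp add: algebra_simps sum_subtractf)

lemma TT_scale: "TT (\<lambda>A. c * G A) B = c * TT G B"
  unfolding TT_def by (simp add: algebra_simps sum_distrib_left)

lemma AA_lin: "AA (\<lambda>A. F A - c * G A) B = AA F B - c * AA G B"
proof -
  have "AA (\<lambda>A. F A - c * G A) B = (\<Sum>l\<in>U. (if l \<in> B then (Qc - 1) * F (B - {l}) + (Qc - 2) * F B else F (insert l B))
     - c * (if l \<in> B then (Qc - 1) * G (B - {l}) + (Qc - 2) * G B else G (insert l B)))"
    unfolding AA_def by (intro sum.cong) (auto simp: algebra_simps)
  also have "\<dots> = AA F B - c * AA G B"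
    unfolding AA_def by (simp add: sum_subtractf sum_distrib_left)
  finally show ?thesis .
qed

lemma AA_neg: "AA (\<lambda>A. - F A) B = - AA F B"
  using AA_lin[of "\<lambda>_. 0" 1 F B] by (simp add: AA_def)

lemma om_sq: "om a True * om True c + om a False * om False c = (if a = c then Qc else 0)"
  by (cases a; cases c) (auto simp: om_def algebra_simps)

lemma ww_ww: assumes "A \<subseteq> U" "C \<subseteq> U"
  shows "(\<Sum>B\<in>Pow U. ww A B * ww B C) = (if A = C then Qc ^ D else 0)"
proof -
  have "(\<Sum>B\<in>Pow U. ww A B * ww B C) = (\<Sum>B\<in>Pow U. \<Prod>i\<in>U. om (i \<in> A) (i \<in> B) * om (i \<in> B) (i \<in> C))"
    unfolding ww_def by (simp add: prod.distrib)
  also have "\<dots> = (\<Prod>i\<in>U. om (i \<in> A) True * om True (i \<in> C) + om (i \<in> A) False * om False (i \<in> C))"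
    by (rule sum_pow_prod[of U "\<lambda>i b. om (i \<in> A) b * om b (i \<in> C)", simplified])
  also have "\<dots> = (\<Prod>i\<in>U. if (i \<in> A) = (i \<in> C) then Qc else 0)"
    by (simp add: om_sq)
  also have "\<dots> = (if A = C then Qc ^ D else 0)"
  proof (cases "A = C")
    case True then show ?thesis by simp
  next
    case False
    then obtain i where "i \<in> U" "(i \<in> A) \<noteq> (i \<in> C)" using assms by blast
    then have "(\<Prod>i\<in>U. if (i \<in> A) = (i \<in> C) then Qc else 0) = 0"
      by (intro prod_zero) auto
    then show ?thesis using False by simp
  qed
  finally show ?thesis .
qed

lemma TT_TT: assumes "C \<in> Pow U" shows "TT (TT F) C = Qc ^ D * F C"
proof -
  have "TT (TT F) C = (\<Sum>B\<in>Pow U. \<Sum>A\<in>Pow U. F A * ww A B * ww B C)"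
    unfolding TT_def by (simp add: sum_distrib_right)
  also have "\<dots> = (\<Sum>A\<in>Pow U. F A * (\<Sum>B\<in>Pow U. ww A B * ww B C))"
    by (subst sum.swap) (simp add: sum_distrib_left mult.assoc)
  also have "\<dots> = (\<Sum>A\<in>Pow U. if A = C then F A * Qc ^ D else 0)"
    using assms by (intro sum.cong) (auto simp: ww_ww)
  also have "\<dots> = Qc ^ D * F C" using assms by (simp add: sum.delta mult.commute)
  finally show ?thesis .
qed

lemma TT_zero_imp: assumes "\<And>B. B \<in> Pow U \<Longrightarrow> TT F B = 0" "C \<in> Pow U" shows "F C = 0"
proof -
  have "TT (TT F) C = TT (\<lambda>_. 0) C" by (rule arg_cong[OF TT_cong]) (use assms in auto)
  then have "Qc ^ D * F C = 0" using TT_TT[OF assms(2)] by (simp add: TT_def)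
  then show ?thesis using Qc_nz by simp
qed

end

lemma sum_Pow_split:
  fixes g :: "nat set \<Rightarrow> 'c::comm_monoid_add"
  assumes "finite S" "l \<in> S"
  shows "(\<Sum>A\<in>Pow S. g A) = (\<Sum>A\<in>Pow (S - {l}). g A + g (insert l A))"
proof -
  have S: "S = insert l (S - {l})" using assms by auto
  have "(\<Sum>A\<in>Pow S. g A) = (\<Sum>A\<in>Pow (S - {l}) \<union> insert l ` Pow (S - {l}). g A)"
    by (subst S) (simp only: Pow_insert)
  also have "\<dots> = (\<Sum>A\<in>Pow (S - {l}). g A) + (\<Sum>A\<in>insert l ` Pow (S - {l}). g A)"
    by (rule sum.union_disjoint) (use assms in auto)
  also have "(\<Sum>A\<in>insert l ` Pow (S - {l}). g A) = (\<Sum>A\<in>Pow (S - {l}). g (insert l A))"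
    by (rule sum.reindex_cong[where l="insert l"]) (auto simp: inj_on_def)
  finally show ?thesis by (simp add: sum.distrib)
qed

context hm
begin

lemma ww_split:
  assumes "l \<in> U" "A \<subseteq> U - {l}"
  shows "ww A B = om False (l \<in> B) * (\<Prod>i\<in>U - {l}. om (i \<in> A) (i \<in> B))"
    and "ww (insert l A) B = om True (l \<in> B) * (\<Prod>i\<in>U - {l}. om (i \<in> A) (i \<in> B))"
proof -
  have "ww A B = om (l \<in> A) (l \<in> B) * (\<Prod>i\<in>U - {l}. om (i \<in> A) (i \<in> B))"
    unfolding ww_def using assms(1) by (subst prod.remove) auto
  moreover have "l \<notin> A" using assms by auto
  ultimately show "ww A B = om False (l \<in> B) * (\<Prod>i\<in>U - {l}. om (i \<in> A) (i \<in> B))"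
    by simp
  have "ww (insert l A) B = om True (l \<in> B) * (\<Prod>i\<in>U - {l}. om (i \<in> insert l A) (i \<in> B))"
    unfolding ww_def using assms(1) by (subst prod.remove) auto
  also have "(\<Prod>i\<in>U - {l}. om (i \<in> insert l A) (i \<in> B)) = (\<Prod>i\<in>U - {l}. om (i \<in> A) (i \<in> B))"
    by (intro prod.cong) auto
  finally show "ww (insert l A) B = om True (l \<in> B) * (\<Prod>i\<in>U - {l}. om (i \<in> A) (i \<in> B))" .
qed

lemma TT_AA_l:
  assumes l: "l \<in> U"
  shows "(\<Sum>A\<in>Pow U. (if l \<in> A then (Qc - 1) * F (A - {l}) + (Qc - 2) * F A else F (insert l A)) * ww A B)
       = (if l \<in> B then -1 else Qc - 1) * TT F B"
proof -
  define R where "R A = (\<Prod>i\<in>U - {l}. om (i \<in> A) (i \<in> B))" for A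
  have lhs: "(\<Sum>A\<in>Pow U. (if l \<in> A then (Qc - 1) * F (A - {l}) + (Qc - 2) * F A else F (insert l A)) * ww A B)
     = (\<Sum>A\<in>Pow (U - {l}). (F (insert l A) * om False (l \<in> B) + ((Qc - 1) * F A + (Qc - 2) * F (insert l A)) * om True (l \<in> B)) * R A)"
    unfolding sum_Pow_split[OF finite_atLeastLessThan l]
  proof (intro sum.cong refl)
    fix A assume A: "A \<in> Pow (U - {l})"
    then have "l \<notin> A" by auto
    then have "insert l A - {l} = A" by auto
    then show "(if l \<in> A then (Qc - 1) * F (A - {l}) + (Qc - 2) * F A else F (insert l A)) * ww A B +
         (if l \<in> insert l A then (Qc - 1) * F (insert l A - {l}) + (Qc - 2) * F (insert l A) else F (insert (l) (insert l A))) * ww (insert l A) B =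
         (F (insert l A) * om False (l \<in> B) + ((Qc - 1) * F A + (Qc - 2) * F (insert l A)) * om True (l \<in> B)) * R A"
      using A `l \<notin> A` ww_split[OF l, of A B] by (simp add: R_def algebra_simps)
  qed
  have rhs: "TT F B = (\<Sum>A\<in>Pow (U - {l}). (F A * om False (l \<in> B) + F (insert l A) * om True (l \<in> B)) * R A)"
    unfolding TT_def sum_Pow_split[OF finite_atLeastLessThan l]
  proof (intro sum.cong refl)
    fix A assume A: "A \<in> Pow (U - {l})"
    then show "F A * ww A B + F (insert l A) * ww (insert l A) B = (F A * om False (l \<in> B) + F (insert l A) * om True (l \<in> B)) * R A"
      using ww_split[OF l, of A B] by (simp add: R_def algebra_simps)
  qed
  show ?thesis
    unfolding lhs rhs sum_distrib_left
    by (intro sum.cong refl) (auto simp: om_def algebra_simps)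
qed

definition Th :: "(nat set \<Rightarrow> complex) \<Rightarrow> nat set \<Rightarrow> complex" where
  "Th F A = th (card A) * F A"

lemma th_sum: assumes "B \<subseteq> U" shows "(\<Sum>l\<in>U. if l \<in> B then -1 else Qc - 1) = th (card B)"
proof -
  have fB: "finite B" using assms finite_subset by blast
  have "(\<Sum>l\<in>U. if l \<in> B then -1 else Qc - 1) = (\<Sum>l\<in>U \<inter> {l. l \<in> B}. -1) + (\<Sum>l\<in>U \<inter> - {l. l \<in> B}. Qc - 1)"
    by (rule sum.If_cases) simp
  also have "U \<inter> {l. l \<in> B} = B" using assms by auto
  also have "U \<inter> - {l. l \<in> B} = U - B" by auto
  also have "card (U - B) = D - card B" using assms by (simp add: card_Diff_subset fB)
  moreover have "card B \<le> D" using assms by (metis card_atLeastLessThan card_mono finite_atLeastLessThan diff_zero)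
  ultimately show ?thesis by (simp add: th_def of_nat_diff algebra_simps)
qed

lemma TT_AA: assumes "B \<subseteq> U" shows "TT (AA F) B = th (card B) * TT F B"
proof -
  have "TT (AA F) B = (\<Sum>l\<in>U. \<Sum>A\<in>Pow U. (if l \<in> A then (Qc - 1) * F (A - {l}) + (Qc - 2) * F A else F (insert l A)) * ww A B)"
    unfolding TT_def AA_def sum_distrib_right by (rule sum.swap)
  also have "\<dots> = (\<Sum>l\<in>U. (if l \<in> B then -1 else Qc - 1) * TT F B)"
    by (intro sum.cong refl TT_AA_l) auto
  also have "\<dots> = th (card B) * TT F B"
    by (simp add: sum_distrib_right[symmetric] th_sum[OF assms])
  finally show ?thesis .
qed

lemma TT_Th: assumes "B \<subseteq> U" shows "TT (Th F) B = AA (TT F) B"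
proof -
  define X where "X = TT F"
  have 1: "TT (TT (AA X)) B = Qc ^ D * AA X B" using TT_TT assms by auto
  have "TT (TT (AA X)) B = TT (\<lambda>C. Qc ^ D * Th F C) B"
  proof (rule arg_cong[OF TT_cong])
    fix C assume C: "C \<in> Pow U"
    show "TT (AA X) C = Qc ^ D * Th F C"
      using C TT_AA[of C X] TT_TT[OF C, of F] unfolding X_def Th_def by simp
  qed
  also have "\<dots> = Qc ^ D * TT (Th F) B" by (rule TT_scale)
  finally show ?thesis using 1 Qc_nz unfolding X_def by simp
qed

lemma ww_swS: assumes "a \<in> U" "b \<in> U" shows "ww (swS a b A) B = ww A (swS a b B)"
proof -
  have "ww (swS a b A) B = (\<Prod>i\<in>U. om (sw a b i \<in> A) (i \<in> B))"
    unfolding ww_def by (simp add: mem_swS)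
  also have "\<dots> = (\<Prod>i\<in>U. om (sw a b (sw a b i) \<in> A) (sw a b i \<in> B))"
    by (rule prod.reindex_bij_betw[symmetric, OF bij_sw[OF assms], where g="\<lambda>i. om (sw a b i \<in> A) (i \<in> B)"])
  also have "\<dots> = ww A (swS a b B)"
    unfolding ww_def by (simp add: mem_swS)
  finally show ?thesis .
qed

lemma TT_swS: assumes "a \<in> U" "b \<in> U"
  shows "TT (\<lambda>A. G (swS a b A)) B = TT G (swS a b B)"
proof -
  have "TT (\<lambda>A. G (swS a b A)) B = (\<Sum>A\<in>Pow U. G (swS a b A) * ww (swS a b (swS a b A)) B)"
    unfolding TT_def by simp
  also have "\<dots> = (\<Sum>A\<in>Pow U. G A * ww (swS a b A) B)"
    by (rule sum.reindex_bij_betw[OF bij_swS_Pow[OF assms], where g="\<lambda>A. G A * ww (swS a b A) B"])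
  also have "\<dots> = TT G (swS a b B)"
    unfolding TT_def using ww_swS[OF assms] by simp
  finally show ?thesis .
qed

lemma AA_swS: assumes "a \<in> U" "b \<in> U" "A \<in> Pow U"
  shows "AA (\<lambda>A. G (swS a b A)) A = AA G (swS a b A)"
proof -
  have "AA G (swS a b A) = (\<Sum>l\<in>U. if sw a b l \<in> swS a b A then (Qc - 1) * G (swS a b A - {sw a b l}) + (Qc - 2) * G (swS a b A)
     else G (insert (sw a b l) (swS a b A)))"
    unfolding AA_def
    by (rule sum.reindex_bij_betw[symmetric, OF bij_sw[OF assms(1,2)], where g="\<lambda>l. if l \<in> swS a b A then (Qc - 1) * G (swS a b A - {l}) + (Qc - 2) * G (swS a b A)
     else G (insert l (swS a b A))"])
  also have "\<dots> = AA (\<lambda>A. G (swS a b A)) A"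
    unfolding AA_def by (intro sum.cong refl) (simp add: mem_swS swS_insert swS_remove)
  finally show ?thesis by simp
qed

end

primrec antisym :: "(nat \<times> nat) list \<Rightarrow> (nat set \<Rightarrow> complex) \<Rightarrow> nat set \<Rightarrow> complex" where
  "antisym [] F = F"
| "antisym (p # ps) F = (\<lambda>A. antisym ps F A - antisym ps F (swS (fst p) (snd p) A))"

definition al :: "(nat \<times> nat) list \<Rightarrow> nat set" where
  "al ps = fst ` set ps"

definition Pset :: "(nat \<times> nat) list \<Rightarrow> nat set" where
  "Pset ps = fst ` set ps \<union> snd ` set ps"

lemma al_Cons[simp]: "al (p # ps) = insert (fst p) (al ps)" by (simp add: al_def)
lemma Pset_Cons[simp]: "Pset (p # ps) = insert (fst p) (insert (snd p) (Pset ps))" by (auto simp: Pset_def)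
lemma al_Pset: "al ps \<subseteq> Pset ps" by (auto simp: al_def Pset_def)

context hm
begin

definition valid :: "(nat \<times> nat) list \<Rightarrow> bool" where
  "valid ps = (distinct (map fst ps @ map snd ps) \<and> Pset ps \<subseteq> U)"

definition Wset :: "(nat \<times> nat) list \<Rightarrow> nat set" where
  "Wset ps = U - Pset ps"

definition LL :: "(nat \<times> nat) list \<Rightarrow> nat \<Rightarrow> nat set set" where
  "LL ps k = {A \<in> Pow U. card A = k \<and> A \<inter> Pset ps = al ps}"

definition lam :: "(nat \<times> nat) list \<Rightarrow> (nat set \<Rightarrow> complex) \<Rightarrow> nat \<Rightarrow> complex" where
  "lam ps H k = (\<Sum>A\<in>LL ps k. H A)"

definition AS :: "(nat \<times> nat) list \<Rightarrow> (nat set \<Rightarrow> complex) \<Rightarrow> bool" where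
  "AS ps H = (\<forall>p\<in>set ps. \<forall>A\<in>Pow U. H (swS (fst p) (snd p) A) = - H A)"

lemma valid_Cons: "valid (p # ps) \<longleftrightarrow> valid ps \<and> fst p \<noteq> snd p \<and> fst p \<notin> Pset ps \<and> snd p \<notin> Pset ps
   \<and> fst p \<in> U \<and> snd p \<in> U"
  unfolding valid_def Pset_def by auto

lemma valid_distinct: assumes "valid ps"
  shows "distinct (map fst ps)" "distinct (map snd ps)" "fst ` set ps \<inter> snd ` set ps = {}"
  using assms unfolding valid_def by auto

lemma valid_fst_snd: assumes "valid ps" "p \<in> set ps" "p' \<in> set ps"
  shows "fst p \<noteq> snd p'" "fst p = fst p' \<Longrightarrow> p = p'" "snd p = snd p' \<Longrightarrow> p = p'"
proof -
  show "fst p \<noteq> snd p'" using valid_distinct(3)[OF assms(1)] assms(2,3) by auto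
  show "fst p = fst p' \<Longrightarrow> p = p'"
    using valid_distinct(1)[OF assms(1)] assms(2,3) by (meson distinct_map inj_onD)
  show "snd p = snd p' \<Longrightarrow> p = p'"
    using valid_distinct(2)[OF assms(1)] assms(2,3) by (meson distinct_map inj_onD)
qed

lemma valid_in_U: "valid ps \<Longrightarrow> p \<in> set ps \<Longrightarrow> fst p \<in> U \<and> snd p \<in> U"
  unfolding valid_def Pset_def by auto

lemma card_al: "valid ps \<Longrightarrow> card (al ps) = length ps"
  unfolding al_def using valid_distinct(1) by (metis distinct_card length_map set_map)

lemma card_Pset: "valid ps \<Longrightarrow> card (Pset ps) = 2 * length ps"
proof -
  assume v: "valid ps"
  have e: "Pset ps = set (map fst ps @ map snd ps)" by (auto simp: Pset_def)
  have d: "distinct (map fst ps @ map snd ps)" using v unfolding valid_def by blast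
  have "card (Pset ps) = length (map fst ps @ map snd ps)"
    unfolding e by (rule distinct_card[OF d])
  then show ?thesis by simp
qed

lemma card_Wset: assumes "valid ps" shows "card (Wset ps) = D - 2 * length ps"
proof -
  have s: "Pset ps \<subseteq> U" using assms unfolding valid_def by blast
  have "card (U - Pset ps) = card U - card (Pset ps)"
    by (rule card_Diff_subset[OF finite_subset[OF s] s]) simp
  then show ?thesis unfolding Wset_def using card_Pset[OF assms] by simp
qed

lemma finite_LL: "finite (LL ps k)"
  unfolding LL_def by simp

lemma AS_antisym: "valid ps \<Longrightarrow> AS ps (antisym ps F)"
proof (induction ps)
  case Nil then show ?case by (simp add: AS_def)
next
  case (Cons p ps)
  obtain a b where p: "p = (a, b)" by force
  have v: "valid ps" and ab: "a \<noteq> b" "a \<notin> Pset ps" "b \<notin> Pset ps" "a \<in> U" "b \<in> U"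
    using Cons.prems by (auto simp: valid_Cons p)
  have IH: "AS ps (antisym ps F)" using Cons.IH v by simp
  define G where "G = antisym ps F"
  show ?case unfolding AS_def
  proof
    fix p' assume p': "p' \<in> set (p # ps)"
    show "\<forall>A\<in>Pow U. antisym (p # ps) F (swS (fst p') (snd p') A) = - antisym (p # ps) F A"
    proof
      fix A assume A: "A \<in> Pow U"
      show "antisym (p # ps) F (swS (fst p') (snd p') A) = - antisym (p # ps) F A"
      proof (cases "p' = p")
        case True
        then show ?thesis by (simp add: p)
      next
        case False
        then have p'ps: "p' \<in> set ps" using p' by auto
        obtain c d where p'': "p' = (c, d)" by force
        have cdps: "(c, d) \<in> set ps" using p'ps p'' by simp
        have "c \<in> fst ` set ps" "d \<in> snd ` set ps" using cdps by (metis fst_conv image_eqI, metis snd_conv image_eqI)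
        then have cd: "c \<in> U" "d \<in> U" "c \<in> Pset ps" "d \<in> Pset ps"
          using valid_in_U[OF v p'ps] p'' by (auto simp: Pset_def)
        have ne: "a \<noteq> c" "a \<noteq> d" "b \<noteq> c" "b \<noteq> d" using ab cd by auto
        have A1: "swS a b A \<in> Pow U" using swS_Pow[OF ab(4,5) A] .
        have "G (swS c d A) = - G A" using IH p'ps A p'' unfolding AS_def G_def by auto
        moreover have "G (swS c d (swS a b A)) = - G (swS a b A)" using IH p'ps A1 p'' unfolding AS_def G_def by auto
        moreover have "swS a b (swS c d A) = swS c d (swS a b A)" using swS_comm[OF ne] .
        ultimately show ?thesis unfolding G_def by (simp add: p p'')
      qed
    qed
  qed
qed

lemma AS_zero: assumes "AS ps H" "p \<in> set ps" "A \<in> Pow U" "fst p \<in> A \<longleftrightarrow> snd p \<in> A"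
  shows "H A = 0"
proof -
  have "H (swS (fst p) (snd p) A) = - H A" using assms(1-3) unfolding AS_def by auto
  moreover have "swS (fst p) (snd p) A = A" using swS_fix assms(4) by blast
  ultimately show ?thesis by simp
qed

lemma antisym_level: "valid ps \<Longrightarrow> (\<And>A. A \<in> Pow U \<Longrightarrow> card A = i \<Longrightarrow> F A = 0) \<Longrightarrow> A \<in> Pow U \<Longrightarrow> card A = i
   \<Longrightarrow> antisym ps F A = 0"
proof (induction ps arbitrary: A)
  case Nil then show ?case by simp
next
  case (Cons p ps)
  have v: "valid ps" and ab: "fst p \<in> U" "snd p \<in> U" using Cons.prems by (auto simp: valid_Cons)
  have "swS (fst p) (snd p) A \<in> Pow U" using swS_Pow[OF ab Cons.prems(3)] .
  then show ?case using Cons.IH[OF v Cons.prems(2)] Cons.prems(3,4) by simp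
qed

lemma antisym_cong: "valid ps \<Longrightarrow> (\<And>A. A \<in> Pow U \<Longrightarrow> F A = G A) \<Longrightarrow> A \<in> Pow U
   \<Longrightarrow> antisym ps F A = antisym ps G A"
proof (induction ps arbitrary: A)
  case Nil then show ?case by simp
next
  case (Cons p ps)
  have v: "valid ps" and ab: "fst p \<in> U" "snd p \<in> U" using Cons.prems by (auto simp: valid_Cons)
  have "swS (fst p) (snd p) A \<in> Pow U" using swS_Pow[OF ab Cons.prems(3)] .
  then show ?case using Cons.IH[OF v Cons.prems(2)] Cons.prems(3) by simp
qed

lemma TT_antisym: "valid ps \<Longrightarrow> B \<in> Pow U \<Longrightarrow> TT (antisym ps F) B = antisym ps (TT F) B"
proof (induction ps arbitrary: B)
  case Nil then show ?case by simp
next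
  case (Cons p ps)
  have v: "valid ps" and ab: "fst p \<in> U" "snd p \<in> U" using Cons.prems by (auto simp: valid_Cons)
  have B1: "swS (fst p) (snd p) B \<in> Pow U" using swS_Pow[OF ab Cons.prems(2)] .
  have "TT (antisym (p # ps) F) B = TT (antisym ps F) B - TT (\<lambda>A. antisym ps F (swS (fst p) (snd p) A)) B"
    by (simp add: TT_diff)
  also have "\<dots> = TT (antisym ps F) B - TT (antisym ps F) (swS (fst p) (snd p) B)"
    using TT_swS[OF ab] by simp
  also have "\<dots> = antisym (p # ps) (TT F) B"
    using Cons.IH[OF v] Cons.prems(2) B1 by simp
  finally show ?case .
qed

lemma AS_cong: assumes "AS ps H" "\<And>A. A \<in> Pow U \<Longrightarrow> H A = H' A" "valid ps"
  shows "AS ps H'"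
  unfolding AS_def
proof (intro ballI)
  fix p A assume p: "p \<in> set ps" and A: "A \<in> Pow U"
  have "swS (fst p) (snd p) A \<in> Pow U" using swS_Pow valid_in_U[OF assms(3) p] A by blast
  then show "H' (swS (fst p) (snd p) A) = - H' A"
    using assms(1) p A assms(2)[symmetric] unfolding AS_def by auto
qed

lemma AS_AA: assumes "valid ps" "AS ps H"
  shows "AS ps (\<lambda>A. AA H A - c * H A)"
  unfolding AS_def
proof (intro ballI)
  fix p A assume p: "p \<in> set ps" and A: "A \<in> Pow U"
  obtain a b where ab: "p = (a, b)" by force
  have abU: "a \<in> U" "b \<in> U" using valid_in_U[OF assms(1) p] ab by auto
  have HS: "\<And>B. B \<in> Pow U \<Longrightarrow> H (swS a b B) = - H B" using assms(2) p ab unfolding AS_def by auto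
  have "AA H (swS a b A) = AA (\<lambda>B. H (swS a b B)) A" using AA_swS[OF abU A] by simp
  also have "\<dots> = AA (\<lambda>B. - H B) A" by (rule AA_cong[OF HS A])
  also have "\<dots> = - AA H A" by (rule AA_neg)
  finally show "AA H (swS (fst p) (snd p) A) - c * H (swS (fst p) (snd p) A) = - (AA H A - c * H A)"
    using HS[OF A] ab by simp
qed

lemma AS_card_range: assumes "valid ps" "AS ps H" "A \<in> Pow U" "H A \<noteq> 0"
  shows "length ps \<le> card A \<and> card A \<le> D - length ps"
proof -
  have ex: "\<And>p. p \<in> set ps \<Longrightarrow> (fst p \<in> A) \<noteq> (snd p \<in> A)"
    using AS_zero[OF assms(2) _ assms(3)] assms(4) by blast
  define f where "f p = (if fst p \<in> A then fst p else snd p)" for p :: "nat \<times> nat"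
  define g where "g p = (if fst p \<in> A then snd p else fst p)" for p :: "nat \<times> nat"
  have injf: "inj_on f (set ps)"
  proof (rule inj_onI)
    fix p p' assume p: "p \<in> set ps" and p': "p' \<in> set ps" and e: "f p = f p'"
    show "p = p'" using valid_fst_snd[OF assms(1) p p'] valid_fst_snd[OF assms(1) p' p] e
      unfolding f_def by (auto split: if_splits)
  qed
  have injg: "inj_on g (set ps)"
  proof (rule inj_onI)
    fix p p' assume p: "p \<in> set ps" and p': "p' \<in> set ps" and e: "g p = g p'"
    show "p = p'" using valid_fst_snd[OF assms(1) p p'] valid_fst_snd[OF assms(1) p' p] e
      unfolding g_def by (auto split: if_splits)
  qed
  have lp: "card (set ps) = length ps"
    using valid_distinct(1)[OF assms(1)] by (metis distinct_card distinct_map)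
  have fA: "f ` set ps \<subseteq> A" using ex unfolding f_def by auto
  have gA: "g ` set ps \<subseteq> U - A" using ex valid_in_U[OF assms(1)] unfolding g_def by auto
  have "card (f ` set ps) \<le> card A" using fA assms(3) by (intro card_mono) (auto intro: finite_subset)
  then have 1: "length ps \<le> card A" using card_image[OF injf] lp by simp
  have "card (g ` set ps) \<le> card (U - A)" using gA by (intro card_mono) auto
  then have "length ps \<le> D - card A" using card_image[OF injg] lp assms(3)
    by (simp add: card_Diff_subset finite_subset)
  moreover have "card A \<le> D" using assms(3) by (metis PowD card_atLeastLessThan card_mono diff_zero finite_atLeastLessThan)
  ultimately show ?thesis using 1 by simp
qed

lemma LL_decomp: assumes "valid ps" "A \<in> LL ps k"
  shows "A = al ps \<union> (A \<inter> Wset ps)" "al ps \<inter> (A \<inter> Wset ps) = {}"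
    "card (A \<inter> Wset ps) = k - length ps" "length ps \<le> k"
    "card (Wset ps - A) = card (Wset ps) - (k - length ps)"
proof -
  have AU: "A \<subseteq> U" and cA: "card A = k" and AP: "A \<inter> Pset ps = al ps" using assms(2) unfolding LL_def by auto
  show 1: "A = al ps \<union> (A \<inter> Wset ps)" using AU AP al_Pset[of ps] unfolding Wset_def by auto
  show 2: "al ps \<inter> (A \<inter> Wset ps) = {}" using al_Pset[of ps] unfolding Wset_def by auto
  have fin: "finite (al ps)" "finite (A \<inter> Wset ps)" using AU by (auto simp: al_def intro: finite_subset)
  have "k = card (al ps) + card (A \<inter> Wset ps)"
    using cA 1 2 card_Un_disjoint[OF fin 2] by simp
  then show "card (A \<inter> Wset ps) = k - length ps" "length ps \<le> k" using card_al[OF assms(1)] by auto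
  moreover have "card (Wset ps - A) = card (Wset ps) - card (Wset ps \<inter> A)"
    by (rule card_Diff_subset_Int) (simp add: Wset_def)
  ultimately show "card (Wset ps - A) = card (Wset ps) - (k - length ps)"
    by (simp add: Int_commute)
qed

lemma LL_low: "valid ps \<Longrightarrow> k < length ps \<Longrightarrow> LL ps k = {}"
  using LL_decomp(4) by fastforce

lemma lam_lin: "lam ps (\<lambda>A. F A - c * G A) k = lam ps F k - c * lam ps G k"
  unfolding lam_def by (simp add: sum_subtractf sum_distrib_left)

end

context hm
begin

lemma DC1: assumes v: "valid ps"
  shows "(\<Sum>A\<in>LL ps k. \<Sum>l\<in>Wset ps - A. H (insert l A))
       = (\<Sum>A\<in>LL ps (Suc k). of_nat (card (A \<inter> Wset ps)) * H A)"
proof -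
  have "(\<Sum>A\<in>LL ps k. \<Sum>l\<in>Wset ps - A. H (insert l A)) = (\<Sum>(A, l)\<in>(SIGMA A:LL ps k. Wset ps - A). H (insert l A))"
    by (rule sum.Sigma) (auto simp: finite_LL Wset_def)
  also have "\<dots> = (\<Sum>(A, l)\<in>(SIGMA A:LL ps (Suc k). A \<inter> Wset ps). H A)"
  proof (rule sum.reindex_bij_witness[where i="\<lambda>(A, l). (A - {l}, l)" and j="\<lambda>(A, l). (insert l A, l)"])
    fix a assume a: "a \<in> (SIGMA A:LL ps k. Wset ps - A)"
    obtain A l where al: "a = (A, l)" by force
    have A: "A \<in> LL ps k" and l: "l \<in> Wset ps" "l \<notin> A" using a al by auto
    have fA: "finite A" using A unfolding LL_def by (auto intro: finite_subset)
    show "(case case a of (A, l) \<Rightarrow> (insert l A, l) of (A, l) \<Rightarrow> (A - {l}, l)) = a"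
      using al l by auto
    have "insert l A \<in> LL ps (Suc k)" using A l fA unfolding LL_def Wset_def by auto
    then show "(case a of (A, l) \<Rightarrow> (insert l A, l)) \<in> (SIGMA A:LL ps (Suc k). A \<inter> Wset ps)"
      using al l by auto
    show "(case case a of (A, l) \<Rightarrow> (insert l A, l) of (A, l) \<Rightarrow> H A) = (case a of (A, l) \<Rightarrow> H (insert l A))"
      using al by auto
  next
    fix b assume b: "b \<in> (SIGMA A:LL ps (Suc k). A \<inter> Wset ps)"
    obtain A l where al: "b = (A, l)" by force
    have A: "A \<in> LL ps (Suc k)" and l: "l \<in> Wset ps" "l \<in> A" using b al by auto
    have fA: "finite A" using A unfolding LL_def by (auto intro: finite_subset)
    show "(case case b of (A, l) \<Rightarrow> (A - {l}, l) of (A, l) \<Rightarrow> (insert l A, l)) = b"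
      using al l by auto
    have "A - {l} \<in> LL ps k" using A l fA unfolding LL_def Wset_def by auto
    then show "(case b of (A, l) \<Rightarrow> (A - {l}, l)) \<in> (SIGMA A:LL ps k. Wset ps - A)"
      using al l by auto
  qed
  also have "\<dots> = (\<Sum>A\<in>LL ps (Suc k). \<Sum>l\<in>A \<inter> Wset ps. H A)"
    by (rule sum.Sigma[symmetric]) (auto simp: finite_LL Wset_def)
  also have "\<dots> = (\<Sum>A\<in>LL ps (Suc k). of_nat (card (A \<inter> Wset ps)) * H A)"
    by simp
  finally show ?thesis .
qed

lemma DC2: assumes v: "valid ps" and k: "1 \<le> k"
  shows "(\<Sum>A\<in>LL ps k. \<Sum>l\<in>A \<inter> Wset ps. H (A - {l}))
       = (\<Sum>A\<in>LL ps (k - 1). of_nat (card (Wset ps - A)) * H A)"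
proof -
  have "(\<Sum>A\<in>LL ps k. \<Sum>l\<in>A \<inter> Wset ps. H (A - {l})) = (\<Sum>(A, l)\<in>(SIGMA A:LL ps k. A \<inter> Wset ps). H (A - {l}))"
    by (rule sum.Sigma) (auto simp: finite_LL Wset_def)
  also have "\<dots> = (\<Sum>(A, l)\<in>(SIGMA A:LL ps (k - 1). Wset ps - A). H A)"
  proof (rule sum.reindex_bij_witness[where j="\<lambda>(A, l). (A - {l}, l)" and i="\<lambda>(A, l). (insert l A, l)"])
    fix a assume a: "a \<in> (SIGMA A:LL ps k. A \<inter> Wset ps)"
    obtain A l where al: "a = (A, l)" by force
    have A: "A \<in> LL ps k" and l: "l \<in> Wset ps" "l \<in> A" using a al by auto
    have fA: "finite A" using A unfolding LL_def by (auto intro: finite_subset)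
    show "(case case a of (A, l) \<Rightarrow> (A - {l}, l) of (A, l) \<Rightarrow> (insert l A, l)) = a"
      using al l by auto
    have "A - {l} \<in> LL ps (k - 1)" using A l fA unfolding LL_def Wset_def by auto
    then show "(case a of (A, l) \<Rightarrow> (A - {l}, l)) \<in> (SIGMA A:LL ps (k - 1). Wset ps - A)"
      using al l by auto
    show "(case case a of (A, l) \<Rightarrow> (A - {l}, l) of (A, l) \<Rightarrow> H A) = (case a of (A, l) \<Rightarrow> H (A - {l}))"
      using al by auto
  next
    fix b assume b: "b \<in> (SIGMA A:LL ps (k - 1). Wset ps - A)"
    obtain A l where al: "b = (A, l)" by force
    have A: "A \<in> LL ps (k - 1)" and l: "l \<in> Wset ps" "l \<notin> A" using b al by auto
    have fA: "finite A" using A unfolding LL_def by (auto intro: finite_subset)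
    show "(case case b of (A, l) \<Rightarrow> (insert l A, l) of (A, l) \<Rightarrow> (A - {l}, l)) = b"
      using al l by auto
    have "insert l A \<in> LL ps k" using A l fA k unfolding LL_def Wset_def by auto
    then show "(case b of (A, l) \<Rightarrow> (insert l A, l)) \<in> (SIGMA A:LL ps k. A \<inter> Wset ps)"
      using al l by auto
  qed
  also have "\<dots> = (\<Sum>A\<in>LL ps (k - 1). \<Sum>l\<in>Wset ps - A. H A)"
    by (rule sum.Sigma[symmetric]) (auto simp: finite_LL Wset_def)
  also have "\<dots> = (\<Sum>A\<in>LL ps (k - 1). of_nat (card (Wset ps - A)) * H A)"
    by simp
  finally show ?thesis .
qed

lemma AA_point: assumes v: "valid ps" and H: "AS ps H" and A: "A \<in> LL ps k"
  shows "AA H A = (Qc - 2) * of_nat k * H A + (Qc - 1) * (\<Sum>l\<in>A \<inter> Wset ps. H (A - {l}))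
     + (\<Sum>l\<in>Wset ps - A. H (insert l A))"
proof -
  have AU: "A \<subseteq> U" and cA: "card A = k" and AP: "A \<inter> Pset ps = al ps" using A unfolding LL_def by auto
  have "AA H A = (\<Sum>l\<in>U \<inter> {l. l \<in> A}. (Qc - 1) * H (A - {l}) + (Qc - 2) * H A) + (\<Sum>l\<in>U \<inter> - {l. l \<in> A}. H (insert l A))"
    unfolding AA_def by (rule sum.If_cases) simp
  also have "U \<inter> {l. l \<in> A} = A" using AU by auto
  also have "U \<inter> - {l. l \<in> A} = U - A" by auto
  also have "(\<Sum>l\<in>A. (Qc - 1) * H (A - {l}) + (Qc - 2) * H A) = (Qc - 1) * (\<Sum>l\<in>A. H (A - {l})) + (Qc - 2) * of_nat k * H A"
    using cA by (simp add: sum.distrib sum_distrib_left)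
  also have "(\<Sum>l\<in>A. H (A - {l})) = (\<Sum>l\<in>A \<inter> Wset ps. H (A - {l}))"
  proof (rule sum.mono_neutral_right)
    show "finite A" using AU by (auto intro: finite_subset)
    show "A \<inter> Wset ps \<subseteq> A" by auto
    show "\<forall>l\<in>A - A \<inter> Wset ps. H (A - {l}) = 0"
    proof
      fix l assume l: "l \<in> A - A \<inter> Wset ps"
      then have "l \<in> al ps" using AP AU unfolding Wset_def by auto
      then obtain p where p: "p \<in> set ps" "fst p = l" unfolding al_def by auto
      have "snd p \<in> Pset ps" using p unfolding Pset_def by auto
      moreover have "snd p \<notin> al ps"
      proof
        assume "snd p \<in> al ps"
        then obtain p' where p': "p' \<in> set ps" "fst p' = snd p" by (auto simp: al_def)
        then show False using valid_fst_snd(1)[OF v p'(1) p(1)] by simp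
      qed
      ultimately have "snd p \<notin> A" using AP by auto
      then show "H (A - {l}) = 0"
        using AS_zero[OF H p(1), of "A - {l}"] AU p(2) by auto
    qed
  qed
  also have "(\<Sum>l\<in>U - A. H (insert l A)) = (\<Sum>l\<in>Wset ps - A. H (insert l A))"
  proof (rule sum.mono_neutral_right)
    show "finite (U - A)" by simp
    show "Wset ps - A \<subseteq> U - A" unfolding Wset_def by auto
    show "\<forall>l\<in>(U - A) - (Wset ps - A). H (insert l A) = 0"
    proof
      fix l assume l: "l \<in> (U - A) - (Wset ps - A)"
      then have lP: "l \<in> Pset ps" "l \<notin> A" unfolding Wset_def by auto
      then have "l \<notin> al ps" using AP by auto
      then have "l \<in> snd ` set ps" using lP unfolding Pset_def al_def by auto
      then obtain p where p: "p \<in> set ps" "snd p = l" by auto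
      have "fst p \<in> al ps" using p unfolding al_def by auto
      then have "fst p \<in> A" using AP by auto
      moreover have "insert l A \<in> Pow U" using AU lP v unfolding valid_def by auto
      ultimately show "H (insert l A) = 0"
        using AS_zero[OF H p(1), of "insert l A"] p(2) by auto
    qed
  qed
  finally show ?thesis by (simp add: algebra_simps)
qed

lemma lam_AA: assumes v: "valid ps" and H: "AS ps H" and k: "1 \<le> k"
  shows "lam ps (AA H) k = (Qc - 2) * of_nat k * lam ps H k
     + (Qc - 1) * (\<Sum>A\<in>LL ps (k - 1). of_nat (card (Wset ps - A)) * H A)
     + (\<Sum>A\<in>LL ps (Suc k). of_nat (card (A \<inter> Wset ps)) * H A)"
proof -
  have "lam ps (AA H) k = (\<Sum>A\<in>LL ps k. (Qc - 2) * of_nat k * H A + (Qc - 1) * (\<Sum>l\<in>A \<inter> Wset ps. H (A - {l}))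
     + (\<Sum>l\<in>Wset ps - A. H (insert l A)))"
    unfolding lam_def by (intro sum.cong refl AA_point[OF v H])
  also have "\<dots> = (Qc - 2) * of_nat k * lam ps H k + (Qc - 1) * (\<Sum>A\<in>LL ps k. \<Sum>l\<in>A \<inter> Wset ps. H (A - {l}))
     + (\<Sum>A\<in>LL ps k. \<Sum>l\<in>Wset ps - A. H (insert l A))"
    unfolding lam_def by (simp add: sum.distrib sum_distrib_left)
  finally show ?thesis unfolding DC1[OF v] DC2[OF v k] .
qed

lemma weighted1: assumes v: "valid ps"
  shows "(\<Sum>A\<in>LL ps j. of_nat (card (A \<inter> Wset ps)) * H A) = of_nat (j - length ps) * lam ps H j"
  unfolding lam_def sum_distrib_left using LL_decomp(3)[OF v] by (intro sum.cong) auto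

lemma weighted2: assumes v: "valid ps"
  shows "(\<Sum>A\<in>LL ps j. of_nat (card (Wset ps - A)) * H A) = of_nat (card (Wset ps) - (j - length ps)) * lam ps H j"
  unfolding lam_def sum_distrib_left using LL_decomp(5)[OF v] by (intro sum.cong) auto

primrec polyA :: "complex list \<Rightarrow> (nat set \<Rightarrow> complex) \<Rightarrow> nat set \<Rightarrow> complex" where
  "polyA [] H = H"
| "polyA (c # cs) H = polyA cs (\<lambda>A. AA H A - c * H A)"

lemma krylov_step:
  assumes v: "valid ps" and r: "1 \<le> length ps" and H: "AS ps H"
    and z: "\<forall>j<m. lam ps H j = 0" and nz: "lam ps H m \<noteq> 0" and m: "length ps < m"
  shows "(\<forall>j<m - 1. lam ps (\<lambda>A. AA H A - c * H A) j = 0) \<and> lam ps (\<lambda>A. AA H A - c * H A) (m - 1) \<noteq> 0"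
proof
  show "\<forall>j<m - 1. lam ps (\<lambda>A. AA H A - c * H A) j = 0"
  proof (intro allI impI)
    fix j assume j: "j < m - 1"
    show "lam ps (\<lambda>A. AA H A - c * H A) j = 0"
    proof (cases "j = 0")
      case True
      then have "LL ps j = {}" using LL_low[OF v, of 0] r by (cases ps) auto
      then show ?thesis by (simp add: lam_def)
    next
      case False
      have "lam ps (AA H) j = 0"
        using lam_AA[OF v H, of j] False z j weighted1[OF v] weighted2[OF v] by simp
      then show ?thesis using z j by (simp add: lam_lin)
    qed
  qed
  have m1: "1 \<le> m - 1" using m r by simp
  have "lam ps (AA H) (m - 1) = of_nat (m - length ps) * lam ps H m"
    using lam_AA[OF v H m1] z m1 weighted1[OF v, where j=m and H=H] weighted2[OF v, where j="m - 1 - 1" and H=H] by simp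
  then have "lam ps (\<lambda>A. AA H A - c * H A) (m - 1) = of_nat (m - length ps) * lam ps H m"
    using z m1 by (simp add: lam_lin)
  then show "lam ps (\<lambda>A. AA H A - c * H A) (m - 1) \<noteq> 0" using nz m by simp
qed

lemma krylov_iter:
  assumes v: "valid ps" and r: "1 \<le> length ps"
  shows "AS ps H \<Longrightarrow> \<forall>j<m. lam ps H j = 0 \<Longrightarrow> lam ps H m \<noteq> 0 \<Longrightarrow> length ps + length cs \<le> m
    \<Longrightarrow> lam ps (polyA cs H) (m - length cs) \<noteq> 0"
proof (induction cs arbitrary: H m)
  case Nil then show ?case by simp
next
  case (Cons c cs)
  have m: "length ps < m" using Cons.prems(4) by simp
  note st = krylov_step[OF v r Cons.prems(1,2,3) m, of c]
  have "lam ps (polyA cs (\<lambda>A. AA H A - c * H A)) (m - 1 - length cs) \<noteq> 0"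
    by (rule Cons.IH[OF AS_AA[OF v Cons.prems(1)]]) (use st Cons.prems(4) in auto)
  then show ?case by (simp add: diff_diff_left)
qed

lemma krylov:
  assumes v: "valid ps" and r: "1 \<le> length ps" and H: "AS ps H"
    and low: "\<forall>j<length ps + length cs. lam ps H j = 0"
    and pz: "\<And>A. A \<in> Pow U \<Longrightarrow> polyA cs H A = 0"
  shows "lam ps H k = 0"
proof (rule ccontr)
  assume nz: "lam ps H k \<noteq> 0"
  define m where "m = (LEAST j. lam ps H j \<noteq> 0)"
  have mnz: "lam ps H m \<noteq> 0" unfolding m_def by (rule LeastI[of _ k]) (rule nz)
  have mz: "\<forall>j<m. lam ps H j = 0" unfolding m_def using not_less_Least by blast
  have mge: "length ps + length cs \<le> m" using low mnz by (meson not_le)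
  have "lam ps (polyA cs H) (m - length cs) \<noteq> 0" by (rule krylov_iter[OF v r H mz mnz mge])
  moreover have "lam ps (polyA cs H) (m - length cs) = 0"
    unfolding lam_def using pz by (intro sum.neutral) (auto simp: LL_def)
  ultimately show False by simp
qed

end

context hm
begin

lemma card_sub_U: "A \<subseteq> U \<Longrightarrow> card A \<le> D"
  by (metis card_atLeastLessThan card_mono finite_atLeastLessThan diff_zero)

lemma U_split: assumes v: "valid ps"
  shows "(\<Prod>i\<in>U. g i) = (\<Prod>i\<in>Wset ps. g i) * (\<Prod>i\<in>al ps. g i) * (\<Prod>i\<in>snd ` set ps. g i)"
proof -
  have PU: "Pset ps \<subseteq> U" using v unfolding valid_def by blast
  have dj: "al ps \<inter> snd ` set ps = {}" using valid_distinct(3)[OF v] unfolding al_def .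
  have fin: "finite (al ps)" "finite (snd ` set ps)" by (auto simp: al_def)
  have e: "U = Wset ps \<union> Pset ps" using PU unfolding Wset_def by auto
  have fW: "finite (Wset ps)" "finite (Pset ps)" using PU unfolding Wset_def by (auto intro: finite_subset)
  have dj2: "Wset ps \<inter> Pset ps = {}" unfolding Wset_def by auto
  have "(\<Prod>i\<in>U. g i) = (\<Prod>i\<in>Wset ps \<union> Pset ps. g i)" using e by simp
  also have "\<dots> = (\<Prod>i\<in>Wset ps. g i) * (\<Prod>i\<in>Pset ps. g i)"
    by (rule prod.union_disjoint[OF fW dj2])
  also have "(\<Prod>i\<in>Pset ps. g i) = (\<Prod>i\<in>al ps. g i) * (\<Prod>i\<in>snd ` set ps. g i)"
    unfolding Pset_def al_def[symmetric] by (rule prod.union_disjoint[OF fin dj])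
  finally show ?thesis by (simp add: mult.assoc)
qed

definition LLall :: "(nat \<times> nat) list \<Rightarrow> nat set set" where
  "LLall ps = {A \<in> Pow U. A \<inter> Pset ps = al ps}"

lemma group_card:
  fixes g :: "nat set \<Rightarrow> complex" and h :: "nat \<Rightarrow> complex"
  shows "(\<Sum>A\<in>LLall ps. g A * h (card A)) = (\<Sum>k\<le>D. h k * (\<Sum>A\<in>LL ps k. g A))"
proof -
  have "(\<Sum>A\<in>LLall ps. g A * h (card A)) = (\<Sum>k\<in>{..D}. \<Sum>A\<in>{A \<in> LLall ps. card A = k}. g A * h (card A))"
  proof (rule sum.group[symmetric])
    show "finite (LLall ps)" unfolding LLall_def by simp
    show "finite {..D}" by simp
    show "card ` LLall ps \<subseteq> {..D}" unfolding LLall_def using card_sub_U by auto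
  qed
  also have "\<dots> = (\<Sum>k\<le>D. h k * (\<Sum>A\<in>LL ps k. g A))"
  proof (intro sum.cong refl)
    fix k
    have e: "{A \<in> LLall ps. card A = k} = LL ps k" unfolding LLall_def LL_def by auto
    have "(\<Sum>A\<in>LL ps k. g A * h (card A)) = (\<Sum>A\<in>LL ps k. h k * g A)"
      by (intro sum.cong refl) (auto simp: LL_def mult.commute)
    then show "(\<Sum>A\<in>{A \<in> LLall ps. card A = k}. g A * h (card A)) = h k * (\<Sum>A\<in>LL ps k. g A)"
      unfolding e by (simp add: sum_distrib_left)
  qed
  finally show ?thesis .
qed

lemma sum_LLall_prod:
  fixes f :: "nat \<Rightarrow> bool \<Rightarrow> complex"
  assumes v: "valid ps"
  shows "(\<Sum>A\<in>LLall ps. \<Prod>i\<in>U. f i (i \<in> A))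
     = (\<Prod>i\<in>Wset ps. f i True + f i False) * (\<Prod>i\<in>al ps. f i True) * (\<Prod>i\<in>snd ` set ps. f i False)"
proof -
  have PU: "Pset ps \<subseteq> U" using v unfolding valid_def by blast
  have dj: "al ps \<inter> snd ` set ps = {}" using valid_distinct(3)[OF v] unfolding al_def .
  have img: "LLall ps = (\<lambda>X. X \<union> al ps) ` Pow (Wset ps)"
  proof
    show "LLall ps \<subseteq> (\<lambda>X. X \<union> al ps) ` Pow (Wset ps)"
    proof
      fix A assume A: "A \<in> LLall ps"
      then have "A = (A \<inter> Wset ps) \<union> al ps" using al_Pset[of ps] unfolding LLall_def Wset_def by auto
      then show "A \<in> (\<lambda>X. X \<union> al ps) ` Pow (Wset ps)" by blast
    qed
    show "(\<lambda>X. X \<union> al ps) ` Pow (Wset ps) \<subseteq> LLall ps"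
      using PU al_Pset[of ps] unfolding LLall_def Wset_def by auto
  qed
  have inj: "inj_on (\<lambda>X. X \<union> al ps) (Pow (Wset ps))"
  proof (rule inj_onI)
    fix X Y assume "X \<in> Pow (Wset ps)" "Y \<in> Pow (Wset ps)" "X \<union> al ps = Y \<union> al ps"
    then show "X = Y" using al_Pset[of ps] unfolding Wset_def by blast
  qed
  have "(\<Sum>A\<in>LLall ps. \<Prod>i\<in>U. f i (i \<in> A)) = (\<Sum>X\<in>Pow (Wset ps). \<Prod>i\<in>U. f i (i \<in> X \<union> al ps))"
    unfolding img by (rule sum.reindex[OF inj, unfolded comp_def])
  also have "\<dots> = (\<Sum>X\<in>Pow (Wset ps). (\<Prod>i\<in>Wset ps. f i (i \<in> X)) * (\<Prod>i\<in>al ps. f i True) * (\<Prod>i\<in>snd ` set ps. f i False))"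
  proof (intro sum.cong refl)
    fix X assume X: "X \<in> Pow (Wset ps)"
    have "(\<Prod>i\<in>U. f i (i \<in> X \<union> al ps)) = (\<Prod>i\<in>Wset ps. f i (i \<in> X \<union> al ps)) * (\<Prod>i\<in>al ps. f i (i \<in> X \<union> al ps))
       * (\<Prod>i\<in>snd ` set ps. f i (i \<in> X \<union> al ps))" by (rule U_split[OF v])
    also have "(\<Prod>i\<in>Wset ps. f i (i \<in> X \<union> al ps)) = (\<Prod>i\<in>Wset ps. f i (i \<in> X))"
    proof (intro prod.cong refl)
      fix i assume "i \<in> Wset ps"
      then have "i \<notin> al ps" using al_Pset[of ps] unfolding Wset_def by blast
      then show "f i (i \<in> X \<union> al ps) = f i (i \<in> X)" by simp
    qed
    also have "(\<Prod>i\<in>al ps. f i (i \<in> X \<union> al ps)) = (\<Prod>i\<in>al ps. f i True)" by (intro prod.cong) auto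
    also have "(\<Prod>i\<in>snd ` set ps. f i (i \<in> X \<union> al ps)) = (\<Prod>i\<in>snd ` set ps. f i False)"
    proof (intro prod.cong refl)
      fix i assume i: "i \<in> snd ` set ps"
      then have "i \<notin> al ps" using dj by blast
      moreover have "i \<notin> X" using X i unfolding Wset_def Pset_def by blast
      ultimately show "f i (i \<in> X \<union> al ps) = f i False" by simp
    qed
    finally show "(\<Prod>i\<in>U. f i (i \<in> X \<union> al ps)) = (\<Prod>i\<in>Wset ps. f i (i \<in> X)) * (\<Prod>i\<in>al ps. f i True) * (\<Prod>i\<in>snd ` set ps. f i False)" .
  qed
  also have "\<dots> = (\<Sum>X\<in>Pow (Wset ps). \<Prod>i\<in>Wset ps. f i (i \<in> X)) * (\<Prod>i\<in>al ps. f i True) * (\<Prod>i\<in>snd ` set ps. f i False)"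
    by (simp only: sum_distrib_right)
  also have "(\<Sum>X\<in>Pow (Wset ps). \<Prod>i\<in>Wset ps. f i (i \<in> X)) = (\<Prod>i\<in>Wset ps. f i True + f i False)"
    by (rule sum_pow_prod) (simp add: Wset_def)
  finally show ?thesis .
qed

lemma peel_one:
  fixes psi :: "nat \<Rightarrow> bool \<Rightarrow> complex"
  assumes ab: "a \<in> U" "b \<in> U" "a \<noteq> b" "a \<notin> Q" "b \<notin> Q" and QU: "Q \<subseteq> U" and gQ: "\<gamma> \<subseteq> Q"
    and H: "\<And>B. B \<in> Pow U \<Longrightarrow> H (swS a b B) = - H B"
  shows "(\<Sum>B\<in>{B \<in> Pow U. B \<inter> Q = \<gamma>}. H B * (\<Prod>i\<in>U - Q. psi i (i \<in> B)))
    = (psi a True * psi b False - psi a False * psi b True) *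
      (\<Sum>B\<in>{B \<in> Pow U. B \<inter> insert a (insert b Q) = insert a \<gamma>}. H B * (\<Prod>i\<in>U - insert a (insert b Q). psi i (i \<in> B)))"
proof -
  define S where "S = {B \<in> Pow U. B \<inter> Q = \<gamma>}"
  define S1 where "S1 = {B \<in> S. a \<in> B \<and> b \<notin> B}"
  define S2 where "S2 = {B \<in> S. a \<notin> B \<and> b \<in> B}"
  define R where "R B = (\<Prod>i\<in>U - insert a (insert b Q). psi i (i \<in> B))" for B
  define f where "f B = H B * (\<Prod>i\<in>U - Q. psi i (i \<in> B))" for B
  have fS: "finite S" unfolding S_def by simp
  have split: "\<And>B. (\<Prod>i\<in>U - Q. psi i (i \<in> B)) = psi a (a \<in> B) * psi b (b \<in> B) * R B"
  proof -
    fix B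
    have e: "U - insert a (insert b Q) = (U - Q - {a}) - {b}" by auto
    have "(\<Prod>i\<in>U - Q. psi i (i \<in> B)) = psi a (a \<in> B) * (\<Prod>i\<in>U - Q - {a}. psi i (i \<in> B))"
      using ab by (subst prod.remove[of _ a]) auto
    also have "(\<Prod>i\<in>U - Q - {a}. psi i (i \<in> B)) = psi b (b \<in> B) * (\<Prod>i\<in>(U - Q - {a}) - {b}. psi i (i \<in> B))"
      using ab by (subst prod.remove[of _ b]) auto
    finally show "(\<Prod>i\<in>U - Q. psi i (i \<in> B)) = psi a (a \<in> B) * psi b (b \<in> B) * R B"
      unfolding R_def e by (simp add: mult.assoc)
  qed
  have R_sw: "R (swS a b B) = R B" for B
    unfolding R_def
  proof (rule prod.cong[OF refl])
    fix i assume "i \<in> U - insert a (insert b Q)"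
    then show "psi i (i \<in> swS a b B) = psi i (i \<in> B)" by (auto simp: mem_swS sw_def split: if_splits)
  qed
  have "sum f (S1 \<union> S2) = sum f S"
  proof (rule sum.mono_neutral_left)
    show "finite S" by (rule fS)
    show "S1 \<union> S2 \<subseteq> S" unfolding S1_def S2_def by auto
    show "\<forall>B\<in>S - (S1 \<union> S2). f B = 0"
    proof
      fix B assume B: "B \<in> S - (S1 \<union> S2)"
      then have "a \<in> B \<longleftrightarrow> b \<in> B" unfolding S1_def S2_def by auto
      then have "swS a b B = B" by (rule swS_fix)
      moreover have "B \<in> Pow U" using B unfolding S_def by auto
      ultimately have "H B = 0" using H[of B] by simp
      then show "f B = 0" unfolding f_def by simp
    qed
  qed
  then have "sum f S = sum f (S1 \<union> S2)" by simp
  also have "\<dots> = sum f S1 + sum f S2"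
    by (rule sum.union_disjoint) (use fS in \<open>auto simp: S1_def S2_def\<close>)
  also have "sum f S2 = sum (\<lambda>B. f (swS a b B)) S1"
  proof (rule sum.reindex_bij_witness[where i="swS a b" and j="swS a b"])
    fix B assume B: "B \<in> S2"
    show "swS a b (swS a b B) = B" by simp
    have "swS a b B \<in> Pow U" using B swS_Pow[OF ab(1,2)] unfolding S2_def S_def by auto
    moreover have "swS a b B \<inter> Q = \<gamma>" using B ab unfolding S2_def S_def by (auto simp: mem_swS sw_def split: if_splits)
    ultimately show "swS a b B \<in> S1" using B ab unfolding S1_def S2_def S_def by (auto simp: mem_swS sw_def split: if_splits)
    show "f (swS a b (swS a b B)) = f B" by simp
  next
    fix B assume B: "B \<in> S1"
    show "swS a b (swS a b B) = B" by simp
    have "swS a b B \<in> Pow U" using B swS_Pow[OF ab(1,2)] unfolding S1_def S_def by auto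
    moreover have "swS a b B \<inter> Q = \<gamma>" using B ab unfolding S1_def S_def by (auto simp: mem_swS sw_def split: if_splits)
    ultimately show "swS a b B \<in> S2" using B ab unfolding S1_def S2_def S_def by (auto simp: mem_swS sw_def split: if_splits)
  qed
  also have "sum f S1 + sum (\<lambda>B. f (swS a b B)) S1 =
      (\<Sum>B\<in>S1. (psi a True * psi b False - psi a False * psi b True) * (H B * R B))"
    unfolding sum.distrib[symmetric]
  proof (intro sum.cong refl)
    fix B assume B: "B \<in> S1"
    have BU: "B \<in> Pow U" using B unfolding S1_def S_def by auto
    have m: "a \<in> B" "b \<notin> B" using B unfolding S1_def by auto
    have m2: "a \<notin> swS a b B" "b \<in> swS a b B" using m ab(3) by (auto simp: mem_swS sw_def split: if_splits)
    show "f B + f (swS a b B) = (psi a True * psi b False - psi a False * psi b True) * (H B * R B)"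
      unfolding f_def split R_sw H[OF BU] using m m2 by (simp add: algebra_simps)
  qed
  also have "S1 = {B \<in> Pow U. B \<inter> insert a (insert b Q) = insert a \<gamma>}"
    unfolding S1_def S_def using ab gQ by auto
  finally show ?thesis unfolding f_def S_def R_def by (simp add: sum_distrib_left)
qed

lemma peel_all:
  fixes psi :: "nat \<Rightarrow> bool \<Rightarrow> complex"
  shows "valid qs \<Longrightarrow> AS qs H \<Longrightarrow> Q \<inter> Pset qs = {} \<Longrightarrow> \<gamma> \<subseteq> Q \<Longrightarrow> Q \<subseteq> U \<Longrightarrow>
    \<exists>c. (\<Sum>B\<in>{B \<in> Pow U. B \<inter> Q = \<gamma>}. H B * (\<Prod>i\<in>U - Q. psi i (i \<in> B)))
       = c * (\<Sum>B\<in>{B \<in> Pow U. B \<inter> (Q \<union> Pset qs) = \<gamma> \<union> al qs}. H B * (\<Prod>i\<in>U - (Q \<union> Pset qs). psi i (i \<in> B)))"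
proof (induction qs arbitrary: Q \<gamma>)
  case Nil
  then show ?case by (intro exI[of _ 1]) (simp add: Pset_def al_def)
next
  case (Cons p qs)
  obtain a b where p: "p = (a, b)" by force
  have v: "valid qs" and ab: "a \<noteq> b" "a \<notin> Pset qs" "b \<notin> Pset qs" "a \<in> U" "b \<in> U"
    using Cons.prems(1) by (auto simp: valid_Cons p)
  have abQ: "a \<notin> Q" "b \<notin> Q" using Cons.prems(3) p by auto
  have Hs: "\<And>B. B \<in> Pow U \<Longrightarrow> H (swS a b B) = - H B" using Cons.prems(2) p unfolding AS_def by auto
  have ASq: "AS qs H" using Cons.prems(2) unfolding AS_def by auto
  note one = peel_one[where H=H and a=a and b=b and Q=Q and \<gamma>=\<gamma> and psi=psi, OF ab(4,5,1) abQ Cons.prems(5,4) Hs]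
  have Q'1: "insert a (insert b Q) \<inter> Pset qs = {}" using Cons.prems(3) ab by auto
  have Q'2: "insert a \<gamma> \<subseteq> insert a (insert b Q)" using Cons.prems(4) by auto
  have Q'3: "insert a (insert b Q) \<subseteq> U" using Cons.prems(5) ab by auto
  obtain c where c: "(\<Sum>B\<in>{B \<in> Pow U. B \<inter> insert a (insert b Q) = insert a \<gamma>}. H B * (\<Prod>i\<in>U - insert a (insert b Q). psi i (i \<in> B)))
     = c * (\<Sum>B\<in>{B \<in> Pow U. B \<inter> (insert a (insert b Q) \<union> Pset qs) = insert a \<gamma> \<union> al qs}. H B * (\<Prod>i\<in>U - (insert a (insert b Q) \<union> Pset qs). psi i (i \<in> B)))"
    using Cons.IH[OF v ASq Q'1 Q'2 Q'3] by blast
  have e1: "insert a (insert b Q) \<union> Pset qs = Q \<union> Pset (p # qs)" using p by auto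
  have e2: "insert a \<gamma> \<union> al qs = \<gamma> \<union> al (p # qs)" using p by auto
  have "(\<Sum>B\<in>{B \<in> Pow U. B \<inter> Q = \<gamma>}. H B * (\<Prod>i\<in>U - Q. psi i (i \<in> B))) =
     ((psi a True * psi b False - psi a False * psi b True) * c) *
     (\<Sum>B\<in>{B \<in> Pow U. B \<inter> (insert a (insert b Q) \<union> Pset qs) = insert a \<gamma> \<union> al qs}. H B * (\<Prod>i\<in>U - (insert a (insert b Q) \<union> Pset qs). psi i (i \<in> B)))"
  proof -
    have "(\<Sum>B\<in>{B \<in> Pow U. B \<inter> Q = \<gamma>}. H B * (\<Prod>i\<in>U - Q. psi i (i \<in> B))) =
     (psi a True * psi b False - psi a False * psi b True) * (c *
     (\<Sum>B\<in>{B \<in> Pow U. B \<inter> (insert a (insert b Q) \<union> Pset qs) = insert a \<gamma> \<union> al qs}. H B * (\<Prod>i\<in>U - (insert a (insert b Q) \<union> Pset qs). psi i (i \<in> B))))"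
      using one c by simp
    then show ?thesis by (simp add: mult.assoc)
  qed
  then show ?case unfolding e1 e2 by blast
qed

lemma lam_TT:
  assumes v: "valid ps" and H: "AS ps H" and z0: "\<And>k. lam ps H k = 0"
  shows "lam ps (TT H) k = 0"
proof (cases "k \<le> D")
  case False
  then have "LL ps k = {}" unfolding LL_def using card_sub_U by fastforce
  then show ?thesis by (simp add: lam_def)
next
  case True
  have PU: "Pset ps \<subseteq> U" using v unfolding valid_def by blast
  have main: "(\<Sum>k\<le>D. lam ps (TT H) k * z ^ k) = 0" for z :: complex
  proof -
    define psi where "psi i y = (if i \<in> al ps then om y True * z else if i \<in> snd ` set ps then om y False
        else om y True * z + om y False)" for i y
    have "(\<Sum>k\<le>D. lam ps (TT H) k * z ^ k) = (\<Sum>A\<in>LLall ps. TT H A * z ^ card A)"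
      by (subst group_card) (simp add: lam_def mult.commute)
    also have "\<dots> = (\<Sum>A\<in>LLall ps. \<Sum>B\<in>Pow U. H B * (ww B A * z ^ card A))"
      unfolding TT_def by (simp add: sum_distrib_right mult.assoc)
    also have "\<dots> = (\<Sum>B\<in>Pow U. H B * (\<Sum>A\<in>LLall ps. ww B A * z ^ card A))"
      by (subst sum.swap) (simp add: sum_distrib_left)
    also have "\<dots> = (\<Sum>B\<in>Pow U. H B * (\<Prod>i\<in>U - {}. psi i (i \<in> B)))"
    proof (intro sum.cong refl arg_cong2[where f=times])
      fix B assume B: "B \<in> Pow U"
      have "(\<Sum>A\<in>LLall ps. ww B A * z ^ card A) = (\<Sum>A\<in>LLall ps. \<Prod>i\<in>U. om (i \<in> B) (i \<in> A) * (if i \<in> A then z else 1))"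
      proof (intro sum.cong refl)
        fix A assume A: "A \<in> LLall ps"
        then have AU: "A \<subseteq> U" unfolding LLall_def by auto
        have "(\<Prod>i\<in>U. (if i \<in> A then z else 1)) = z ^ card A"
          using prod_bool_split[of U A "\<lambda>i x. if x then z else 1"] AU by simp
        then show "ww B A * z ^ card A = (\<Prod>i\<in>U. om (i \<in> B) (i \<in> A) * (if i \<in> A then z else 1))"
          unfolding ww_def by (simp add: prod.distrib)
      qed
      also have "\<dots> = (\<Prod>i\<in>Wset ps. om (i \<in> B) True * z + om (i \<in> B) False) * (\<Prod>i\<in>al ps. om (i \<in> B) True * z)
           * (\<Prod>i\<in>snd ` set ps. om (i \<in> B) False)"
        using sum_LLall_prod[OF v, of "\<lambda>i x. om (i \<in> B) x * (if x then z else 1)"] by simp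
      also have "\<dots> = (\<Prod>i\<in>U. psi i (i \<in> B))"
      proof -
        have dj: "al ps \<inter> snd ` set ps = {}" using valid_distinct(3)[OF v] unfolding al_def .
        have "(\<Prod>i\<in>Wset ps. om (i \<in> B) True * z + om (i \<in> B) False) = (\<Prod>i\<in>Wset ps. psi i (i \<in> B))"
          unfolding psi_def Wset_def Pset_def al_def by (intro prod.cong) auto
        moreover have "(\<Prod>i\<in>al ps. om (i \<in> B) True * z) = (\<Prod>i\<in>al ps. psi i (i \<in> B))"
          unfolding psi_def by (intro prod.cong) auto
        moreover have "(\<Prod>i\<in>snd ` set ps. om (i \<in> B) False) = (\<Prod>i\<in>snd ` set ps. psi i (i \<in> B))"
          unfolding psi_def using dj by (intro prod.cong) auto
        ultimately show ?thesis using U_split[OF v, of "\<lambda>i. psi i (i \<in> B)"] by simp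
      qed
      finally show "(\<Sum>A\<in>LLall ps. ww B A * z ^ card A) = (\<Prod>i\<in>U - {}. psi i (i \<in> B))" by simp
    qed
    also have "\<dots> = (\<Sum>B\<in>{B \<in> Pow U. B \<inter> {} = {}}. H B * (\<Prod>i\<in>U - {}. psi i (i \<in> B)))"
      by (intro sum.cong) auto
    also obtain c where "\<dots> = c * (\<Sum>B\<in>{B \<in> Pow U. B \<inter> ({} \<union> Pset ps) = {} \<union> al ps}. H B * (\<Prod>i\<in>U - ({} \<union> Pset ps). psi i (i \<in> B)))"
      using peel_all[OF v H, of "{}" "{}" psi] by auto
    also have "(\<Sum>B\<in>{B \<in> Pow U. B \<inter> ({} \<union> Pset ps) = {} \<union> al ps}. H B * (\<Prod>i\<in>U - ({} \<union> Pset ps). psi i (i \<in> B)))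
       = (\<Sum>B\<in>LLall ps. H B * ((1 - z) ^ (card B - length ps) * (1 + (Qc - 1) * z) ^ (card (Wset ps) - (card B - length ps))))"
    proof (intro sum.cong)
      show "{B \<in> Pow U. B \<inter> ({} \<union> Pset ps) = {} \<union> al ps} = LLall ps" unfolding LLall_def by auto
    next
      fix B assume B: "B \<in> LLall ps"
      have "Wset ps - B \<inter> Wset ps = Wset ps - B" by auto
      from B have BL: "B \<in> LL ps (card B)" unfolding LLall_def LL_def by auto
      have "(\<Prod>i\<in>U - ({} \<union> Pset ps). psi i (i \<in> B)) = (\<Prod>i\<in>Wset ps. om (i \<in> B) True * z + om (i \<in> B) False)"
        unfolding Wset_def psi_def Pset_def al_def by (intro prod.cong) auto
      also have "\<dots> = (\<Prod>i\<in>B \<inter> Wset ps. om True True * z + om True False) * (\<Prod>i\<in>Wset ps - (B \<inter> Wset ps). om False True * z + om False False)"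
        using prod_bool_split[of "Wset ps" "B \<inter> Wset ps" "\<lambda>i x. om x True * z + om x False"]
        by (simp add: Wset_def)
      also have "\<dots> = (1 - z) ^ (card B - length ps) * (1 + (Qc - 1) * z) ^ (card (Wset ps) - (card B - length ps))"
        using LL_decomp(3,5)[OF v BL] \<open>Wset ps - B \<inter> Wset ps = Wset ps - B\<close> by (simp add: om_def Int_commute algebra_simps)
      finally show "H B * (\<Prod>i\<in>U - ({} \<union> Pset ps). psi i (i \<in> B)) = H B * ((1 - z) ^ (card B - length ps) * (1 + (Qc - 1) * z) ^ (card (Wset ps) - (card B - length ps)))"
        by simp
    qed
    also have "\<dots> = (\<Sum>k\<le>D. ((1 - z) ^ (k - length ps) * (1 + (Qc - 1) * z) ^ (card (Wset ps) - (k - length ps))) * lam ps H k)"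
      using group_card[of H "\<lambda>k. (1 - z) ^ (k - length ps) * (1 + (Qc - 1) * z) ^ (card (Wset ps) - (k - length ps))" ps]
      unfolding lam_def by simp
    also have "\<dots> = 0" using z0 by simp
    finally show ?thesis by simp
  qed
  have "\<forall>i\<le>D. lam ps (TT H) i = 0"
    using polyfun_eq_0[of "\<lambda>k. lam ps (TT H) k" D] main by blast
  then show ?thesis using True by blast
qed

end

context hm
begin

primrec polyT :: "complex list \<Rightarrow> (nat set \<Rightarrow> complex) \<Rightarrow> nat set \<Rightarrow> complex" where
  "polyT [] H = H"
| "polyT (c # cs) H = polyT cs (\<lambda>A. (th (card A) - c) * H A)"

lemma polyT_val: "polyT cs H A = prod_list (map (\<lambda>c. th (card A) - c) cs) * H A"
  by (induction cs arbitrary: H) (auto simp: algebra_simps)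

lemma polyA_cong: "(\<And>A. A \<in> Pow U \<Longrightarrow> X A = Y A) \<Longrightarrow> B \<in> Pow U \<Longrightarrow> polyA cs X B = polyA cs Y B"
proof (induction cs arbitrary: X Y)
  case Nil then show ?case by simp
next
  case (Cons c cs)
  have "\<And>A. A \<in> Pow U \<Longrightarrow> AA X A - c * X A = AA Y A - c * Y A"
    using AA_cong[of X Y] Cons.prems(1) by simp
  then show ?case using Cons.IH[of "\<lambda>A. AA X A - c * X A" "\<lambda>A. AA Y A - c * Y A"] Cons.prems(2) by simp
qed

lemma TT_polyA: "B \<in> Pow U \<Longrightarrow> TT (polyA cs H) B = prod_list (map (\<lambda>c. th (card B) - c) cs) * TT H B"
proof (induction cs arbitrary: H)
  case Nil then show ?case by simp
next
  case (Cons c cs)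
  have "TT (polyA (c # cs) H) B = prod_list (map (\<lambda>c. th (card B) - c) cs) * TT (\<lambda>A. AA H A - c * H A) B"
    using Cons by simp
  also have "TT (\<lambda>A. AA H A - c * H A) B = (th (card B) - c) * TT H B"
    using TT_lin[of "AA H" c H B] TT_AA[of B H] Cons.prems by (simp add: algebra_simps)
  finally show ?case by (simp add: algebra_simps)
qed

lemma TT_polyT: "B \<in> Pow U \<Longrightarrow> TT (polyT cs H) B = polyA cs (TT H) B"
proof (induction cs arbitrary: H B)
  case Nil then show ?case by simp
next
  case (Cons c cs)
  have "TT (polyT (c # cs) H) B = polyA cs (TT (\<lambda>A. (th (card A) - c) * H A)) B"
    using Cons by simp
  also have "\<dots> = polyA cs (\<lambda>A. AA (TT H) A - c * TT H A) B"
  proof (rule polyA_cong[OF _ Cons.prems])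
    fix A assume A: "A \<in> Pow U"
    have "TT (\<lambda>A. (th (card A) - c) * H A) A = TT (\<lambda>A. Th H A - c * H A) A"
      unfolding Th_def by (simp add: algebra_simps)
    also have "\<dots> = AA (TT H) A - c * TT H A" using TT_lin TT_Th A by simp
    finally show "TT (\<lambda>A. (th (card A) - c) * H A) A = AA (TT H) A - c * TT H A" .
  qed
  finally show ?case by simp
qed

lemma lam_cong: "(\<And>A. A \<in> Pow U \<Longrightarrow> X A = Y A) \<Longrightarrow> lam ps X k = lam ps Y k"
  unfolding lam_def LL_def by (intro sum.cong) auto

lemma lam_level_zero: assumes "\<And>A. A \<in> Pow U \<Longrightarrow> card A = j \<Longrightarrow> X A = 0" shows "lam ps X j = 0"
  unfolding lam_def using assms by (intro sum.neutral) (auto simp: LL_def)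

lemma core:
  assumes v: "valid ps" and r: "1 \<le> length ps"
    and hyp: "(\<exists>m. (\<forall>A\<in>Pow U. 1 \<le> card A \<and> card A < length ps + m \<longrightarrow> F A = 0)
        \<and> card {j. length ps \<le> j \<and> j \<le> D - length ps \<and> (\<exists>B\<in>Pow U. card B = j \<and> TT F B \<noteq> 0)} \<le> m)
     \<or> (\<exists>m. (\<forall>B\<in>Pow U. 1 \<le> card B \<and> card B < length ps + m \<longrightarrow> TT F B = 0)
        \<and> card {i. length ps \<le> i \<and> i \<le> D - length ps \<and> (\<exists>A\<in>Pow U. card A = i \<and> F A \<noteq> 0)} \<le> m)"
  shows "lam ps (antisym ps F) k = 0"
proof -
  define G where "G = antisym ps F"
  have ASG: "AS ps G" unfolding G_def by (rule AS_antisym[OF v])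
  have low_empty: "\<And>j X. j < length ps \<Longrightarrow> lam ps X j = 0"
    using LL_low[OF v] by (simp add: lam_def)
  from hyp show ?thesis
  proof
    assume "\<exists>m. (\<forall>A\<in>Pow U. 1 \<le> card A \<and> card A < length ps + m \<longrightarrow> F A = 0)
        \<and> card {j. length ps \<le> j \<and> j \<le> D - length ps \<and> (\<exists>B\<in>Pow U. card B = j \<and> TT F B \<noteq> 0)} \<le> m"
    then obtain m where m1: "\<forall>A\<in>Pow U. 1 \<le> card A \<and> card A < length ps + m \<longrightarrow> F A = 0"
      and m2: "card {j. length ps \<le> j \<and> j \<le> D - length ps \<and> (\<exists>B\<in>Pow U. card B = j \<and> TT F B \<noteq> 0)} \<le> m"
      by blast
    define J where "J = {j. length ps \<le> j \<and> j \<le> D - length ps \<and> (\<exists>B\<in>Pow U. card B = j \<and> TT F B \<noteq> 0)}"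
    have fJ: "finite J" unfolding J_def by (rule finite_subset[of _ "{..D}"]) auto
    define cs where "cs = map th (sorted_list_of_set J)"
    have lcs: "length cs \<le> m" using m2 fJ unfolding cs_def J_def by simp
    have scs: "set cs = th ` J" unfolding cs_def using fJ by simp
    have pz: "polyA cs G A = 0" if A: "A \<in> Pow U" for A
    proof (rule TT_zero_imp[OF _ A])
      fix B assume B: "B \<in> Pow U"
      show "TT (polyA cs G) B = 0"
      proof (cases "TT G B = 0")
        case True then show ?thesis using TT_polyA[OF B] by simp
      next
        case False
        then have nz: "antisym ps (TT F) B \<noteq> 0" using TT_antisym[OF v B] unfolding G_def by simp
        have rng: "length ps \<le> card B \<and> card B \<le> D - length ps"
          using AS_card_range[OF v AS_antisym[OF v] B nz] .
        have "\<exists>B'\<in>Pow U. card B' = card B \<and> TT F B' \<noteq> 0"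
        proof (rule ccontr)
          assume "\<not> ?thesis"
          then have "antisym ps (TT F) B = 0" using antisym_level[OF v _ B refl, of "TT F"] by blast
          then show False using nz by simp
        qed
        then have "card B \<in> J" using rng unfolding J_def by blast
        then have "0 \<in> set (map (\<lambda>c. th (card B) - c) cs)" using scs by auto
        then show ?thesis using TT_polyA[OF B] by (simp add: prod_list_zero_iff)
      qed
    qed
    have low: "\<forall>j<length ps + length cs. lam ps G j = 0"
    proof (intro allI impI)
      fix j assume j: "j < length ps + length cs"
      show "lam ps G j = 0"
      proof (cases "j < length ps")
        case True then show ?thesis by (rule low_empty)
      next
        case False
        show ?thesis
        proof (rule lam_level_zero)
          fix A assume A: "A \<in> Pow U" "card A = j"
          show "G A = 0" unfolding G_def
            by (rule antisym_level[OF v _ A]) (use m1 False j lcs r in auto)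
        qed
      qed
    qed
    show ?thesis using krylov[OF v r ASG low pz] unfolding G_def .
  next
    assume "\<exists>m. (\<forall>B\<in>Pow U. 1 \<le> card B \<and> card B < length ps + m \<longrightarrow> TT F B = 0)
        \<and> card {i. length ps \<le> i \<and> i \<le> D - length ps \<and> (\<exists>A\<in>Pow U. card A = i \<and> F A \<noteq> 0)} \<le> m"
    then obtain m where m1: "\<forall>B\<in>Pow U. 1 \<le> card B \<and> card B < length ps + m \<longrightarrow> TT F B = 0"
      and m2: "card {i. length ps \<le> i \<and> i \<le> D - length ps \<and> (\<exists>A\<in>Pow U. card A = i \<and> F A \<noteq> 0)} \<le> m"
      by blast
    define I where "I = {i. length ps \<le> i \<and> i \<le> D - length ps \<and> (\<exists>A\<in>Pow U. card A = i \<and> F A \<noteq> 0)}"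
    have fI: "finite I" unfolding I_def by (rule finite_subset[of _ "{..D}"]) auto
    define cs where "cs = map th (sorted_list_of_set I)"
    have lcs: "length cs \<le> m" using m2 fI unfolding cs_def I_def by simp
    have scs: "set cs = th ` I" unfolding cs_def using fI by simp
    have pTz: "polyT cs G A = 0" if A: "A \<in> Pow U" for A
    proof (cases "G A = 0")
      case True then show ?thesis by (simp add: polyT_val)
    next
      case False
      have rng: "length ps \<le> card A \<and> card A \<le> D - length ps"
        using AS_card_range[OF v ASG A False] .
      have "\<exists>A'\<in>Pow U. card A' = card A \<and> F A' \<noteq> 0"
      proof (rule ccontr)
        assume "\<not> ?thesis"
        then have "G A = 0" unfolding G_def using antisym_level[OF v _ A refl, of F] by blast
        then show False using False by simp
      qed
      then have "card A \<in> I" using rng unfolding I_def by blast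
      then have "0 \<in> set (map (\<lambda>c. th (card A) - c) cs)" using scs by auto
      then show ?thesis by (simp add: polyT_val prod_list_zero_iff)
    qed
    define H where "H = antisym ps (TT F)"
    have ASH: "AS ps H" unfolding H_def by (rule AS_antisym[OF v])
    have HG: "\<And>B. B \<in> Pow U \<Longrightarrow> TT G B = H B" unfolding G_def H_def using TT_antisym[OF v] by simp
    have pz: "polyA cs H B = 0" if B: "B \<in> Pow U" for B
    proof -
      have "polyA cs H B = polyA cs (TT G) B" using polyA_cong[OF _ B, of H "TT G"] HG by simp
      also have "\<dots> = TT (polyT cs G) B" using TT_polyT[OF B] by simp
      also have "\<dots> = TT (\<lambda>_. 0) B" by (rule arg_cong[OF TT_cong]) (use pTz in auto)
      finally show ?thesis by (simp add: TT_def)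
    qed
    have low: "\<forall>j<length ps + length cs. lam ps H j = 0"
    proof (intro allI impI)
      fix j assume j: "j < length ps + length cs"
      show "lam ps H j = 0"
      proof (cases "j < length ps")
        case True then show ?thesis by (rule low_empty)
      next
        case False
        show ?thesis
        proof (rule lam_level_zero)
          fix A assume A: "A \<in> Pow U" "card A = j"
          show "H A = 0" unfolding H_def
            by (rule antisym_level[OF v _ A]) (use m1 False j lcs r in auto)
        qed
      qed
    qed
    have lH: "\<And>k. lam ps H k = 0" using krylov[OF v r ASH low pz] by blast
    have lTG: "\<And>k. lam ps (TT G) k = 0" using lH lam_cong[of "TT G" H] HG by metis
    have ASTG: "AS ps (TT G)" using AS_cong[OF ASH _ v, of "TT G"] HG by simp
    have "lam ps (TT (TT G)) k = 0" by (rule lam_TT[OF v ASTG lTG])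
    moreover have "lam ps (TT (TT G)) k = Qc ^ D * lam ps G k"
      unfolding lam_def sum_distrib_left using TT_TT by (intro sum.cong) (auto simp: LL_def)
    ultimately show ?thesis using Qc_nz unfolding G_def by simp
  qed
qed

end

lemma johnson_conn:
  assumes fW: "finite W"
    and sw: "\<And>S a b. S \<subseteq> W \<Longrightarrow> card S = n \<Longrightarrow> a \<in> S \<Longrightarrow> b \<in> W \<Longrightarrow> b \<notin> S \<Longrightarrow> \<phi> S = \<phi> (insert b (S - {a}))"
  shows "S \<subseteq> W \<Longrightarrow> S' \<subseteq> W \<Longrightarrow> card S = n \<Longrightarrow> card S' = n \<Longrightarrow> \<phi> S = \<phi> S'"
proof (induction "card (S - S')" arbitrary: S)
  case 0
  have fS: "finite S" "finite S'" using 0 fW by (auto intro: finite_subset)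
  then have "S \<subseteq> S'" using 0 by auto
  then have "S = S'" using card_subset_eq[OF fS(2)] 0 by auto
  then show ?case by simp
next
  case (Suc d)
  have fS: "finite S" "finite S'" using Suc.prems fW by (auto intro: finite_subset)
  obtain a where a: "a \<in> S - S'" using Suc.hyps(2) by (metis card.empty ex_in_conv nat.distinct(1))
  have c1: "card (S - S') = card S - card (S \<inter> S')" using card_Diff_subset_Int fS by (simp add: card_Diff_subset_Int)
  have c2: "card (S' - S) = card S' - card (S' \<inter> S)" using fS by (simp add: card_Diff_subset_Int)
  have "card (S' - S) = Suc d" using c1 c2 Suc.hyps(2) Suc.prems(3,4) by (simp add: Int_commute)
  then obtain b where b: "b \<in> S' - S" by (metis card.empty ex_in_conv nat.distinct(1))
  define S1 where "S1 = insert b (S - {a})"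
  have S1W: "S1 \<subseteq> W" using Suc.prems b a unfolding S1_def by auto
  have "card S > 0" using fS a by (auto simp: card_gt_0_iff)
  then have cS1: "card S1 = n" using Suc.prems(3) a b fS unfolding S1_def by (auto simp: card_insert_if)
  have "S1 - S' = (S - S') - {a}" using a b unfolding S1_def by auto
  then have "d = card (S1 - S')" using Suc.hyps(2) a fS by simp
  then have "\<phi> S1 = \<phi> S'" using Suc.hyps(1) S1W Suc.prems(2,4) cS1 by blast
  moreover have "\<phi> S = \<phi> S1" unfolding S1_def using sw[OF Suc.prems(1,3)] a b Suc.prems(2) by auto
  ultimately show ?case by simp
qed

context hm
begin

definition cnd :: "bool \<Rightarrow> nat set \<Rightarrow> nat set \<Rightarrow> bool" where
  "cnd m S A = (if m then A \<inter> S = {} else S \<subseteq> A)"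

definition NN :: "bool \<Rightarrow> (nat \<times> nat) list \<Rightarrow> (nat set \<Rightarrow> complex) \<Rightarrow> nat set \<Rightarrow> nat \<Rightarrow> complex" where
  "NN m ps G S k = (\<Sum>A\<in>{A \<in> LL ps k. cnd m S A}. G A)"

lemma NN_swap:
  assumes v: "valid ps" and S: "S \<subseteq> Wset ps" and a: "a \<in> S" and b: "b \<in> Wset ps" "b \<notin> S"
  shows "NN m ps G S k - NN m ps G (insert b (S - {a})) k
     = NN m ((if m then (b, a) else (a, b)) # ps) (\<lambda>A. G A - G (swS a b A)) (S - {a}) k"
proof -
  define S' where "S' = insert b (S - {a})"
  define X where "X = {A \<in> LL ps k. cnd m S A}"
  have aW: "a \<in> Wset ps" using a S by auto
  have abU: "a \<in> U" "b \<in> U" using aW b unfolding Wset_def by auto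
  have abP: "a \<notin> Pset ps" "b \<notin> Pset ps" using aW b unfolding Wset_def by auto
  have ab: "a \<noteq> b" using a b by auto
  have fX: "finite X" unfolding X_def using finite_LL by simp
  have swLL: "swS a b A \<in> LL ps k" if "A \<in> LL ps k" for A
  proof -
    have "swS a b A \<in> Pow U" using swS_Pow[OF abU] that unfolding LL_def by auto
    moreover have "swS a b A \<inter> Pset ps = A \<inter> Pset ps" using abP by (auto simp: mem_swS sw_def split: if_splits)
    ultimately show ?thesis using that unfolding LL_def by auto
  qed
  have cndS: "cnd m S' (swS a b A) \<longleftrightarrow> cnd m S A" for A
    unfolding cnd_def S'_def using a b ab by (auto simp: mem_swS sw_def split: if_splits)
  have "NN m ps G S' k = (\<Sum>A\<in>X. G (swS a b A))"
    unfolding NN_def X_def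
  proof (rule sum.reindex_bij_witness[where i="swS a b" and j="swS a b"])
    fix A assume A: "A \<in> {A \<in> LL ps k. cnd m S' A}"
    show "swS a b (swS a b A) = A" by simp
    show "swS a b A \<in> {A \<in> LL ps k. cnd m S A}" using A swLL cndS[of "swS a b A"] by auto
    show "G (swS a b (swS a b A)) = G A" by simp
  next
    fix A assume A: "A \<in> {A \<in> LL ps k. cnd m S A}"
    show "swS a b (swS a b A) = A" by simp
    show "swS a b A \<in> {A \<in> LL ps k. cnd m S' A}" using A swLL cndS[of A] by auto
  qed
  then have "NN m ps G S k - NN m ps G S' k = (\<Sum>A\<in>X. G A - G (swS a b A))"
    unfolding NN_def X_def by (simp add: sum_subtractf)
  also have "\<dots> = (\<Sum>A\<in>{A \<in> X. if m then b \<in> A else b \<notin> A}. G A - G (swS a b A))"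
  proof (rule sum.mono_neutral_right[OF fX])
    show "{A \<in> X. if m then b \<in> A else b \<notin> A} \<subseteq> X" by auto
    show "\<forall>A\<in>X - {A \<in> X. if m then b \<in> A else b \<notin> A}. G A - G (swS a b A) = 0"
    proof
      fix A assume A: "A \<in> X - {A \<in> X. if m then b \<in> A else b \<notin> A}"
      then have "a \<in> A \<longleftrightarrow> b \<in> A" using a unfolding X_def cnd_def by (auto split: if_splits)
      then show "G A - G (swS a b A) = 0" using swS_fix by simp
    qed
  qed
  also have "{A \<in> X. if m then b \<in> A else b \<notin> A} = {A \<in> LL ((if m then (b, a) else (a, b)) # ps) k. cnd m (S - {a}) A}"
    unfolding X_def LL_def cnd_def using a b abP ab al_Pset[of ps, unfolded subset_iff] by (auto split: if_splits)
  finally show ?thesis unfolding NN_def S'_def .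
qed

lemma Zchain:
  assumes H0: "\<And>ps k. valid ps \<Longrightarrow> 1 \<le> length ps \<Longrightarrow> length ps \<le> t \<Longrightarrow> lam ps (antisym ps F) k = 0"
  shows "valid ps \<Longrightarrow> 1 \<le> length ps \<Longrightarrow> length ps + n \<le> t \<Longrightarrow> S \<subseteq> Wset ps \<Longrightarrow> card S = n
    \<Longrightarrow> NN m ps (antisym ps F) S k = 0"
proof (induction n arbitrary: ps S k)
  case 0
  have "finite S" using 0 unfolding Wset_def by (auto intro: finite_subset)
  then have "S = {}" using 0 by simp
  then have "NN m ps (antisym ps F) S k = lam ps (antisym ps F) k"
    unfolding NN_def lam_def cnd_def by simp
  then show ?case using H0 0 by simp
next
  case (Suc n)
  define W where "W = Wset ps"
  define G where "G = antisym ps F"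
  define \<phi> where "\<phi> S = NN m ps G S k" for S
  have fW: "finite W" unfolding W_def Wset_def by simp
  have swp: "\<phi> S1 = \<phi> (insert b (S1 - {a}))"
    if S1: "S1 \<subseteq> W" "card S1 = Suc n" "a \<in> S1" "b \<in> W" "b \<notin> S1" for S1 a b
  proof -
    define p where "p = (if m then (b, a) else (a, b))"
    have ab: "a \<noteq> b" using S1 by auto
    have aW: "a \<in> W" using S1 by auto
    have vp: "valid (p # ps)" using Suc.prems(1) aW S1(4) ab unfolding p_def W_def Wset_def
      by (auto simp: valid_Cons)
    have G': "(\<lambda>A. G A - G (swS a b A)) = antisym (p # ps) F"
      unfolding G_def p_def by (auto simp: swS_comm_args)
    have sub: "S1 - {a} \<subseteq> Wset (p # ps)" using S1 unfolding W_def Wset_def p_def by auto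
    have cS: "card (S1 - {a}) = n" using S1 by simp
    have "NN m (p # ps) (antisym (p # ps) F) (S1 - {a}) k = 0"
      by (rule Suc.IH[OF vp _ _ sub cS]) (use Suc.prems in auto)
    then show ?thesis using NN_swap[OF Suc.prems(1) S1(1)[unfolded W_def] S1(3) S1(4)[unfolded W_def] S1(5), of m G k]
      unfolding \<phi>_def G' p_def by simp
  qed
  have const: "\<phi> S1 = \<phi> S" if "S1 \<subseteq> W" "card S1 = Suc n" for S1
    using johnson_conn[OF fW swp, where S=S1 and S'=S] that Suc.prems(4,5) unfolding W_def by auto
  define SS where "SS = {S1. S1 \<subseteq> W \<and> card S1 = Suc n}"
  have fSS: "finite SS" unfolding SS_def using fW by simp
  have sumc: "(\<Sum>S1\<in>SS. \<phi> S1) = of_nat (card SS) * \<phi> S"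
    using const unfolding SS_def by simp
  have cntA: "card {S1 \<in> SS. cnd m S1 A} = (if m then card W - (k - length ps) else k - length ps) choose Suc n"
    if A: "A \<in> LL ps k" for A
  proof -
    have "{S1 \<in> SS. cnd m S1 A} = {S1. S1 \<subseteq> (if m then W - A else W \<inter> A) \<and> card S1 = Suc n}"
      unfolding SS_def cnd_def by auto
    then have "card {S1 \<in> SS. cnd m S1 A} = card (if m then W - A else W \<inter> A) choose Suc n"
      using n_subsets[of "if m then W - A else W \<inter> A" "Suc n"] fW by auto
    also have "card (if m then W - A else W \<inter> A) = (if m then card W - (k - length ps) else k - length ps)"
      using LL_decomp(3,5)[OF Suc.prems(1) A] unfolding W_def by (simp add: Int_commute)
    finally show ?thesis .
  qed
  have "(\<Sum>S1\<in>SS. \<phi> S1) = (\<Sum>S1\<in>SS. \<Sum>A\<in>LL ps k. if cnd m S1 A then G A else 0)"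
    unfolding \<phi>_def NN_def by (intro sum.cong refl sum.inter_filter finite_LL)
  also have "\<dots> = (\<Sum>A\<in>LL ps k. \<Sum>S1\<in>SS. if cnd m S1 A then G A else 0)"
    by (rule sum.swap)
  also have "\<dots> = (\<Sum>A\<in>LL ps k. of_nat (card {S1 \<in> SS. cnd m S1 A}) * G A)"
  proof (intro sum.cong refl)
    fix A
    have "(\<Sum>S1\<in>SS. if cnd m S1 A then G A else 0) = (\<Sum>S1\<in>{S1 \<in> SS. cnd m S1 A}. G A)"
      by (rule sum.inter_filter[OF fSS, symmetric])
    then show "(\<Sum>S1\<in>SS. if cnd m S1 A then G A else 0) = of_nat (card {S1 \<in> SS. cnd m S1 A}) * G A"
      by simp
  qed
  also have "\<dots> = (\<Sum>A\<in>LL ps k. of_nat ((if m then card W - (k - length ps) else k - length ps) choose Suc n) * G A)"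
    by (intro sum.cong refl) (simp add: cntA)
  also have "\<dots> = of_nat ((if m then card W - (k - length ps) else k - length ps) choose Suc n) * lam ps G k"
    unfolding lam_def by (simp add: sum_distrib_left)
  also have "lam ps G k = 0" unfolding G_def using H0 Suc.prems(1,2,3) by simp
  finally have z: "of_nat (card SS) * \<phi> S = 0" using sumc by simp
  have "card S \<le> card W" by (rule card_mono[OF fW]) (use Suc.prems(4) W_def in simp)
  then have "card W \<ge> Suc n" using Suc.prems(5) by simp
  then have "card SS \<noteq> 0" unfolding SS_def using n_subsets[OF fW, of "Suc n"] by simp
  then show ?case using z unfolding \<phi>_def G_def by simp
qed

lemma model_const:
  assumes H0: "\<And>ps k. valid ps \<Longrightarrow> 1 \<le> length ps \<Longrightarrow> length ps \<le> t \<Longrightarrow> lam ps (antisym ps F) k = 0"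
    and t: "1 \<le> t"
    and S: "S \<subseteq> U" "card S = t" and S': "S' \<subseteq> U" "card S' = t"
  shows "NN m [] F S k = NN m [] F S' k"
proof (rule johnson_conn[of U t "\<lambda>S. NN m [] F S k", OF _ _ S(1) S'(1) S(2) S'(2)])
  show "finite U" by simp
next
  fix S1 a b assume S1: "S1 \<subseteq> U" "card S1 = t" "a \<in> S1" "b \<in> U" "b \<notin> S1"
  define p where "p = (if m then (b, a) else (a, b))"
  have v0: "valid []" by (simp add: valid_def Pset_def)
  have W0: "Wset [] = U" by (simp add: Wset_def Pset_def)
  have vp: "valid [p]" using S1 unfolding p_def by (auto simp: valid_Cons v0 Pset_def)
  have G': "(\<lambda>A. F A - F (swS a b A)) = antisym [p] F"
    unfolding p_def by (auto simp: swS_comm_args)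
  have sub: "S1 - {a} \<subseteq> Wset [p]" using S1 unfolding Wset_def p_def by (auto simp: Pset_def)
  have "NN m [p] (antisym [p] F) (S1 - {a}) k = 0"
    by (rule Zchain[OF H0 vp _ _ sub]) (use S1 t in auto)
  then show "NN m [] F S1 k = NN m [] F (insert b (S1 - {a})) k"
    using NN_swap[OF v0 S1(1)[folded W0] S1(3) S1(4)[folded W0] S1(5), of m F k]
    unfolding G' p_def by simp
qed

end

context hm
begin

abbreviation "X \<equiv> hamming_space D q"

definition extz :: "(nat \<Rightarrow> nat) \<Rightarrow> nat \<Rightarrow> nat" where
  "extz g = (\<lambda>i. if i < D then g i else 0)"

lemma X_bij: "bij_betw (\<lambda>v. restrict v U) X (PiE U (\<lambda>_. {0..<q}))"
proof (rule bij_betw_byWitness[where f'=extz])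
  show "\<forall>v\<in>X. extz (restrict v U) = v"
    unfolding hamming_space_def extz_def by (auto intro!: ext)
  show "\<forall>g\<in>PiE U (\<lambda>_. {0..<q}). restrict (extz g) U = g"
    unfolding extz_def by (auto intro!: ext simp: PiE_def extensional_def)
  show "(\<lambda>v. restrict v U) ` X \<subseteq> PiE U (\<lambda>_. {0..<q})"
    unfolding hamming_space_def by auto
  show "extz ` PiE U (\<lambda>_. {0..<q}) \<subseteq> X"
    unfolding hamming_space_def extz_def by (auto simp: PiE_def)
qed

lemma finite_X: "finite X"
proof -
  have "finite (PiE U (\<lambda>_. {0..<q}))" by (rule finite_PiE) auto
  then show ?thesis using bij_betw_finite[OF X_bij] by simp
qed

lemma card_X: "card X = q ^ D"
  using bij_betw_same_card[OF X_bij] card_PiE[of U "\<lambda>_. {0..<q}"] by simp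

lemma sum_prod_X:
  fixes f :: "nat \<Rightarrow> nat \<Rightarrow> complex"
  shows "(\<Sum>v\<in>X. \<Prod>i\<in>U. f i (v i)) = (\<Prod>i\<in>U. \<Sum>x\<in>{0..<q}. f i x)"
proof -
  have "(\<Prod>i\<in>U. \<Sum>x\<in>{0..<q}. f i x) = (\<Sum>g\<in>PiE U (\<lambda>_. {0..<q}). \<Prod>i\<in>U. f i (g i))"
    by (rule prod_sum_PiE) auto
  also have "\<dots> = (\<Sum>v\<in>X. \<Prod>i\<in>U. f i (restrict v U i))"
    by (rule sum.reindex_bij_betw[OF X_bij, symmetric])
  also have "\<dots> = (\<Sum>v\<in>X. \<Prod>i\<in>U. f i (v i))" by simp
  finally show ?thesis by simp
qed

lemma binom_a: "(1 - z) ^ i = (\<Sum>h\<le>i. ((-1) ^ h * of_nat (i choose h)) * (z::complex) ^ h)"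
proof -
  have "(1 - z) ^ i = (- z + 1) ^ i" by simp
  also have "\<dots> = (\<Sum>k\<le>i. of_nat (i choose k) * (- z) ^ k * 1 ^ (i - k))" by (rule binomial_ring)
  also have "\<dots> = (\<Sum>h\<le>i. ((-1) ^ h * of_nat (i choose h)) * z ^ h)"
    by (intro sum.cong refl) (simp add: power_minus[of z] mult_ac)
  finally show ?thesis .
qed

lemma kraw_gen: assumes "i \<le> D"
  shows "(\<Sum>j\<le>D. krawtchouk D q j i * z ^ j) = (1 - z) ^ i * (1 + (Qc - 1) * z) ^ (D - i)"
proof -
  have a: "(1 - z) ^ i = (\<Sum>h\<le>i. ((-1) ^ h * of_nat (i choose h)) * z ^ h)"
    by (rule binom_a)
  have b: "(1 + (Qc - 1) * z) ^ (D - i) = (\<Sum>l\<le>D - i. ((Qc - 1) ^ l * of_nat ((D - i) choose l)) * z ^ l)"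
    using binomial_ring[of "(Qc - 1) * z" 1 "D - i"] by (simp add: power_mult_distrib mult_ac add.commute)
  have "(1 - z) ^ i * (1 + (Qc - 1) * z) ^ (D - i) =
     (\<Sum>r\<le>i + (D - i). (\<Sum>h\<le>r. ((-1) ^ h * of_nat (i choose h)) * ((Qc - 1) ^ (r - h) * of_nat ((D - i) choose (r - h)))) * z ^ r)"
    unfolding a b by (rule polynomial_product) auto
  also have "i + (D - i) = D" using assms by simp
  also have "(\<Sum>r\<le>D. (\<Sum>h\<le>r. ((-1) ^ h * of_nat (i choose h)) * ((Qc - 1) ^ (r - h) * of_nat ((D - i) choose (r - h)))) * z ^ r)
      = (\<Sum>j\<le>D. krawtchouk D q j i * z ^ j)"
  proof (intro sum.cong refl)
    fix r assume "r \<in> {..D}"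
    have "(\<Sum>h\<le>r. ((-1) ^ h * of_nat (i choose h)) * ((Qc - 1) ^ (r - h) * of_nat ((D - i) choose (r - h))))
        = krawtchouk D q r i"
      unfolding krawtchouk_def atLeast0AtMost by (intro sum.cong refl) (simp only: mult_ac)
    then show "(\<Sum>h\<le>r. ((-1) ^ h * of_nat (i choose h)) * ((Qc - 1) ^ (r - h) * of_nat ((D - i) choose (r - h)))) * z ^ r
        = krawtchouk D q r i * z ^ r" by simp
  qed
  finally show ?thesis by simp
qed

lemma kraw_prod: assumes "u \<in> X" "v \<in> X"
  shows "(\<Sum>j\<le>D. krawtchouk D q j (hdist D v u) * z ^ j)
       = (\<Prod>i\<in>U. if v i = u i then 1 + (Qc - 1) * z else 1 - z)"
proof -
  define E where "E = U \<inter> - {i. v i = u i}"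
  have cE: "card E = hdist D v u"
    unfolding hdist_def E_def by (rule arg_cong[where f=card]) auto
  have hd: "hdist D v u \<le> D" unfolding cE[symmetric] E_def by (rule card_sub_U) auto
  have cE2: "card (U \<inter> {i. v i = u i}) = D - hdist D v u"
  proof -
    have "U \<inter> {i. v i = u i} = U - E" unfolding E_def by auto
    moreover have "card (U - E) = card U - card E"
      by (rule card_Diff_subset) (auto simp: E_def)
    ultimately show ?thesis using cE by simp
  qed
  have "(\<Prod>i\<in>U. if v i = u i then 1 + (Qc - 1) * z else 1 - z)
     = (\<Prod>i\<in>U \<inter> {i. v i = u i}. 1 + (Qc - 1) * z) * (\<Prod>i\<in>U \<inter> - {i. v i = u i}. 1 - z)"
    by (rule prod.If_cases) simp
  also have "\<dots> = (1 + (Qc - 1) * z) ^ card (U \<inter> {i. v i = u i}) * (1 - z) ^ card E"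
    unfolding E_def by (simp only: prod_constant)
  also have "\<dots> = (1 - z) ^ hdist D v u * (1 + (Qc - 1) * z) ^ (D - hdist D v u)"
    unfolding cE cE2 by (rule mult.commute)
  also have "\<dots> = (\<Sum>j\<le>D. krawtchouk D q j (hdist D v u) * z ^ j)"
    by (rule kraw_gen[OF hd, symmetric])
  finally show ?thesis by (rule sym)
qed

end

context hm
begin

lemma ww_supp: "ww (word_support D v) B = (\<Prod>i\<in>U. om (v i \<noteq> 0) (i \<in> B))"
  unfolding ww_def word_support_def by (intro prod.cong refl) auto

lemma sum_om: "(\<Sum>x\<in>{0..<q}. om (x \<noteq> 0) b) = (if b then 0 else Qc)"
proof (cases b)
  case True
  have "(\<Sum>x\<in>{0..<q}. om (x \<noteq> 0) b) = (\<Sum>x\<in>{0..<q}. -1 + (if x = 0 then Qc else 0))"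
    using True by (intro sum.cong refl) (auto simp: om_def)
  also have "\<dots> = (\<Sum>x\<in>{0..<q}. -1) + (\<Sum>x\<in>{0..<q}. if x = 0 then Qc else 0)"
    by (rule sum.distrib)
  also have "\<dots> = - Qc + Qc" using q2 by simp
  finally show ?thesis using True by simp
next
  case False then show ?thesis by (simp add: om_def)
qed

lemma coord_sum: assumes c: "c < q"
  shows "(\<Sum>x\<in>{0..<q}. (if x = c then 1 + (Qc - 1) * z else 1 - z) * om (x \<noteq> 0) b)
       = Qc * (if b then z else 1) * om (c \<noteq> 0) b"
proof -
  have 1: "(\<Sum>x\<in>{0..<q}. (if x = c then 1 + (Qc - 1) * z else 1 - z) * om (x \<noteq> 0) b)
      = (\<Sum>x\<in>{0..<q}. (1 - z) * om (x \<noteq> 0) b + (if x = c then Qc * z * om (x \<noteq> 0) b else 0))"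
    by (intro sum.cong refl) (auto simp: algebra_simps)
  have 2: "\<dots> = (\<Sum>x\<in>{0..<q}. (1 - z) * om (x \<noteq> 0) b) + (\<Sum>x\<in>{0..<q}. if x = c then Qc * z * om (x \<noteq> 0) b else 0)"
    by (rule sum.distrib)
  have 3: "(\<Sum>x\<in>{0..<q}. (1 - z) * om (x \<noteq> 0) b) = (1 - z) * (if b then 0 else Qc)"
    by (simp only: sum_distrib_left[symmetric] sum_om)
  have 4: "(\<Sum>x\<in>{0..<q}. if x = c then Qc * z * om (x \<noteq> 0) b else 0) = Qc * z * om (c \<noteq> 0) b"
    using c by (simp add: sum.delta)
  have 5: "(1 - z) * (if b then 0 else Qc) + Qc * z * om (c \<noteq> 0) b = Qc * (if b then z else 1) * om (c \<noteq> 0) b"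
    by (cases b) (auto simp: om_def algebra_simps)
  show ?thesis using 1 2 3 4 5 by simp
qed

lemma sum_v: assumes u: "u \<in> X" and B: "B \<subseteq> U"
  shows "(\<Sum>v\<in>X. (\<Prod>i\<in>U. if v i = u i then 1 + (Qc - 1) * z else 1 - z) * ww (word_support D v) B)
       = Qc ^ D * z ^ card B * ww (word_support D u) B"
proof -
  have "(\<Sum>v\<in>X. (\<Prod>i\<in>U. if v i = u i then 1 + (Qc - 1) * z else 1 - z) * ww (word_support D v) B)
     = (\<Sum>v\<in>X. \<Prod>i\<in>U. (if v i = u i then 1 + (Qc - 1) * z else 1 - z) * om (v i \<noteq> 0) (i \<in> B))"
    by (simp add: ww_supp prod.distrib)
  also have "\<dots> = (\<Prod>i\<in>U. \<Sum>x\<in>{0..<q}. (if x = u i then 1 + (Qc - 1) * z else 1 - z) * om (x \<noteq> 0) (i \<in> B))"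
    by (rule sum_prod_X)
  also have "\<dots> = (\<Prod>i\<in>U. Qc * (if i \<in> B then z else 1) * om (u i \<noteq> 0) (i \<in> B))"
    using u by (intro prod.cong refl coord_sum) (auto simp: hamming_space_def)
  also have "\<dots> = Qc ^ D * (\<Prod>i\<in>U. if i \<in> B then z else 1) * ww (word_support D u) B"
    by (simp add: prod.distrib ww_supp)
  also have "(\<Prod>i\<in>U. if i \<in> B then z else 1) = z ^ card B"
    using prod_bool_split[of U B "\<lambda>i x. if x then z else 1"] B by simp
  finally show ?thesis .
qed

lemma prim_gen: assumes B: "B \<subseteq> U"
  shows "(\<Sum>j\<le>D. (\<Sum>v\<in>X. prim_idem D q j f v * ww (word_support D v) B) * z ^ j)
       = z ^ card B * (\<Sum>u\<in>X. f u * ww (word_support D u) B)"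
proof -
  have qD: "(of_nat (q ^ D) :: complex) = Qc ^ D" by simp
  have "(\<Sum>j\<le>D. (\<Sum>v\<in>X. prim_idem D q j f v * ww (word_support D v) B) * z ^ j)
     = (\<Sum>j\<le>D. \<Sum>v\<in>X. \<Sum>u\<in>X. (1 / Qc ^ D) * (f u * (krawtchouk D q j (hdist D v u) * z ^ j * ww (word_support D v) B)))"
    unfolding prim_idem_def qD
    by (intro sum.cong refl) (simp add: sum_distrib_left sum_distrib_right mult_ac)
  also have "\<dots> = (\<Sum>u\<in>X. \<Sum>v\<in>X. \<Sum>j\<le>D. (1 / Qc ^ D) * (f u * (krawtchouk D q j (hdist D v u) * z ^ j * ww (word_support D v) B)))"
  proof -
    have "(\<Sum>j\<le>D. \<Sum>v\<in>X. \<Sum>u\<in>X. (1 / Qc ^ D) * (f u * (krawtchouk D q j (hdist D v u) * z ^ j * ww (word_support D v) B)))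
      = (\<Sum>v\<in>X. \<Sum>j\<le>D. \<Sum>u\<in>X. (1 / Qc ^ D) * (f u * (krawtchouk D q j (hdist D v u) * z ^ j * ww (word_support D v) B)))"
      by (rule sum.swap)
    also have "\<dots> = (\<Sum>v\<in>X. \<Sum>u\<in>X. \<Sum>j\<le>D. (1 / Qc ^ D) * (f u * (krawtchouk D q j (hdist D v u) * z ^ j * ww (word_support D v) B)))"
      by (intro sum.cong refl sum.swap)
    also have "\<dots> = (\<Sum>u\<in>X. \<Sum>v\<in>X. \<Sum>j\<le>D. (1 / Qc ^ D) * (f u * (krawtchouk D q j (hdist D v u) * z ^ j * ww (word_support D v) B)))"
      by (rule sum.swap)
    finally show ?thesis .
  qed
  also have "\<dots> = (\<Sum>u\<in>X. (1 / Qc ^ D) * f u * (\<Sum>v\<in>X. (\<Sum>j\<le>D. krawtchouk D q j (hdist D v u) * z ^ j) * ww (word_support D v) B))"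
    by (simp add: sum_distrib_left sum_distrib_right mult_ac)
  also have "\<dots> = (\<Sum>u\<in>X. (1 / Qc ^ D) * f u * (Qc ^ D * z ^ card B * ww (word_support D u) B))"
  proof (intro sum.cong refl arg_cong2[where f=times])
    fix u assume u: "u \<in> X"
    have "(\<Sum>v\<in>X. (\<Sum>j\<le>D. krawtchouk D q j (hdist D v u) * z ^ j) * ww (word_support D v) B)
        = (\<Sum>v\<in>X. (\<Prod>i\<in>U. if v i = u i then 1 + (Qc - 1) * z else 1 - z) * ww (word_support D v) B)"
      using u by (intro sum.cong refl) (simp add: kraw_prod)
    also have "\<dots> = Qc ^ D * z ^ card B * ww (word_support D u) B" by (rule sum_v[OF u B])
    finally show "(\<Sum>v\<in>X. (\<Sum>j\<le>D. krawtchouk D q j (hdist D v u) * z ^ j) * ww (word_support D v) B)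
        = Qc ^ D * z ^ card B * ww (word_support D u) B" .
  qed
  also have "\<dots> = z ^ card B * (\<Sum>u\<in>X. f u * ww (word_support D u) B)"
    using Qc_nz by (simp add: sum_distrib_left mult_ac)
  finally show ?thesis .
qed

lemma prim_zero_imp: assumes B: "B \<subseteq> U" and z: "prim_idem D q (card B) f = (\<lambda>_. 0)"
  shows "(\<Sum>u\<in>X. f u * ww (word_support D u) B) = 0"
proof -
  define P where "P = (\<Sum>u\<in>X. f u * ww (word_support D u) B)"
  define c where "c j = (\<Sum>v\<in>X. prim_idem D q j f v * ww (word_support D v) B)" for j
  have cB: "card B \<le> D" by (rule card_sub_U[OF B])
  have "\<forall>z. (\<Sum>j\<le>D. (c j - (if j = card B then P else 0)) * z ^ j) = 0"
  proof
    fix z :: complex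
    have "(\<Sum>j\<le>D. (if j = card B then P else 0) * z ^ j) = z ^ card B * P"
    proof -
      have "(\<Sum>j\<le>D. (if j = card B then P else 0) * z ^ j) = (\<Sum>j\<le>D. if j = card B then P * z ^ j else 0)"
        by (intro sum.cong) auto
      also have "\<dots> = P * z ^ card B" using cB by (simp add: sum.delta)
      finally show ?thesis by (simp add: mult.commute)
    qed
    then show "(\<Sum>j\<le>D. (c j - (if j = card B then P else 0)) * z ^ j) = 0"
      using prim_gen[OF B, of f z] unfolding c_def P_def by (simp add: algebra_simps sum_subtractf)
  qed
  then have "c (card B) - P = 0" using polyfun_eq_0[of "\<lambda>j. c j - (if j = card B then P else 0)" D] cB by auto
  moreover have "c (card B) = 0" unfolding c_def using z by simp
  ultimately show ?thesis unfolding P_def by simp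
qed

end

context hm
begin

definition Fv :: "(nat \<Rightarrow> nat) set \<Rightarrow> nat set \<Rightarrow> complex" where
  "Fv Y A = of_nat (card {y \<in> Y. word_support D y = A})"

lemma supp_sub: "word_support D y \<in> Pow U"
  unfolding word_support_def by auto

lemma sum_F: assumes fY: "finite Y" and AP: "\<A> \<subseteq> Pow U"
  shows "(\<Sum>A\<in>\<A>. Fv Y A) = of_nat (card {y \<in> Y. word_support D y \<in> \<A>})"
proof -
  define S where "S = {y \<in> Y. word_support D y \<in> \<A>}"
  have fS: "finite S" unfolding S_def using fY by simp
  have "card S = (\<Sum>y\<in>S. 1)" by simp
  also have "\<dots> = (\<Sum>A\<in>\<A>. \<Sum>y\<in>{y \<in> S. word_support D y = A}. 1)"
    by (rule sum.group[symmetric]) (use fS AP in \<open>auto simp: S_def intro: finite_subset\<close>)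
  also have "\<dots> = (\<Sum>A\<in>\<A>. card {y \<in> Y. word_support D y = A})"
    by (intro sum.cong refl) (auto simp: S_def intro!: arg_cong[where f=card])
  finally show ?thesis unfolding Fv_def S_def by simp
qed

lemma TT_char: assumes YX: "Y \<subseteq> X"
  shows "(\<Sum>u\<in>X. char_vec D q Y u * ww (word_support D u) B) = TT (Fv Y) B"
proof -
  have fY: "finite Y" using finite_subset[OF YX finite_X] .
  have "(\<Sum>u\<in>X. char_vec D q Y u * ww (word_support D u) B) = (\<Sum>u\<in>Y. ww (word_support D u) B)"
  proof -
    have "(\<Sum>u\<in>X. char_vec D q Y u * ww (word_support D u) B) = (\<Sum>u\<in>X. if u \<in> Y then ww (word_support D u) B else 0)"
      unfolding char_vec_def by (intro sum.cong refl) auto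
    also have "\<dots> = (\<Sum>u\<in>{u \<in> X. u \<in> Y}. ww (word_support D u) B)"
      by (rule sum.inter_filter[OF finite_X, symmetric])
    also have "{u \<in> X. u \<in> Y} = Y" using YX by auto
    finally show ?thesis .
  qed
  also have "\<dots> = (\<Sum>A\<in>Pow U. \<Sum>u\<in>{u \<in> Y. word_support D u = A}. ww (word_support D u) B)"
    by (rule sum.group[symmetric]) (use fY supp_sub in auto)
  also have "\<dots> = (\<Sum>A\<in>Pow U. Fv Y A * ww A B)"
    unfolding Fv_def by (intro sum.cong refl) simp
  finally show ?thesis unfolding TT_def .
qed

lemma hdist0: "hdist D (\<lambda>_. 0) y = card (word_support D y)"
  unfolding hdist_def word_support_def by (metis (mono_tags, lifting))

lemma ww_empty: "ww A {} = 1"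
  unfolding ww_def om_def by simp

end

context hm
begin

lemma main_hm:
  fixes t :: nat and Y :: "(nat \<Rightarrow> nat) set"
  assumes "D \<ge> 1"
    and YX: "Y \<subseteq> hamming_space D q"
    and cY1: "1 < card Y" and cY2: "card Y < card (hamming_space D q)"
    and t1: "1 \<le> t" and tD: "t \<le> D"
    and hyp: "\<forall>r. 1 \<le> r \<and> r \<le> t \<longrightarrow>
           int (card {j. r \<le> j \<and> j \<le> D - r \<and> prim_idem D q j (char_vec D q Y) \<noteq> (\<lambda>_. 0)})
              \<le> int (delta_x D q (\<lambda>_. 0) (char_vec D q Y)) - int r
         \<or> int (card {i. r \<le> i \<and> i \<le> D - r \<and> dual_idem D q (\<lambda>_. 0) i (char_vec D q Y) \<noteq> (\<lambda>_. 0)})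
              \<le> int (delta_star D q (char_vec D q Y)) - int r"
  shows "\<forall>k\<le>D.
           (\<exists>c. \<forall>S. S \<subseteq> {0..<D} \<and> card S = t \<longrightarrow>
              card {y\<in>Y. hweight D y = k \<and> word_support D y \<inter> S = {}} = c)
         \<and> is_t_design {0..<D} t {y\<in>Y. hweight D y = k} (word_support D)"
proof -
  define chi where "chi = char_vec D q Y"
  define F where "F = Fv Y"
  have fY: "finite Y" using finite_subset[OF YX finite_X] .
  have lvl: "F A = 0" if z: "dual_idem D q (\<lambda>_. 0) i chi = (\<lambda>_. 0)" and A: "A \<in> Pow U" "card A = i" for i A
  proof (rule ccontr)
    assume "F A \<noteq> 0"
    then have "card {y \<in> Y. word_support D y = A} \<noteq> 0" unfolding F_def Fv_def by simp
    then have "{y \<in> Y. word_support D y = A} \<noteq> {}" by (metis card.empty)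
    then obtain y where y: "y \<in> Y" "word_support D y = A" by blast
    have "dual_idem D q (\<lambda>_. 0) i chi y = 1"
      using y YX A unfolding dual_idem_def chi_def char_vec_def hdist0 by auto
    then show False using z by (metis one_neq_zero)
  qed
  have tlv: "TT F B = 0" if z: "prim_idem D q j chi = (\<lambda>_. 0)" and B: "B \<in> Pow U" "card B = j" for j B
  proof -
    have "(\<Sum>u\<in>X. chi u * ww (word_support D u) B) = 0"
      using prim_zero_imp[of B chi] z B by auto
    then show ?thesis using TT_char[OF YX, of B] unfolding chi_def F_def by simp
  qed
  define dx where "dx = delta_x D q (\<lambda>_. 0) chi"
  have exx: "\<exists>i. i \<noteq> 0 \<and> i \<le> D \<and> dual_idem D q (\<lambda>_. 0) i chi \<noteq> (\<lambda>_. 0)"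
  proof -
    have "\<not> Y \<subseteq> {\<lambda>_. 0}"
    proof
      assume a: "Y \<subseteq> {\<lambda>_. 0}"
      have "card Y \<le> card {\<lambda>_. 0 :: nat}" using card_mono[OF _ a] by simp
      then show False using cY1 by simp
    qed
    then obtain y where y: "y \<in> Y" "y \<noteq> (\<lambda>_. 0)" by blast
    have yX: "y \<in> X" using y YX by auto
    have "\<exists>j. y j \<noteq> 0"
    proof (rule ccontr)
      assume "\<not> (\<exists>j. y j \<noteq> 0)"
      then have "y = (\<lambda>_. 0)" by auto
      then show False using y(2) by simp
    qed
    then obtain j where j: "y j \<noteq> 0" by blast
    have "j < D"
    proof (rule ccontr)
      assume "\<not> j < D"
      then have "y j = 0" using yX unfolding hamming_space_def by auto
      then show False using j by simp
    qed
    then have "j \<in> word_support D y" using j unfolding word_support_def by simp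
    then have c0: "card (word_support D y) \<noteq> 0" using supp_sub[of y] by (auto simp: card_eq_0_iff finite_subset)
    have cD: "card (word_support D y) \<le> D" using supp_sub[of y] card_sub_U by auto
    have "dual_idem D q (\<lambda>_. 0) (card (word_support D y)) chi y = 1"
      using y yX unfolding dual_idem_def chi_def char_vec_def hdist0 by auto
    then have "dual_idem D q (\<lambda>_. 0) (card (word_support D y)) chi \<noteq> (\<lambda>_. 0)" by (metis one_neq_zero)
    then show ?thesis using c0 cD by blast
  qed
  have dx1: "dx \<noteq> 0 \<and> dx \<le> D \<and> dual_idem D q (\<lambda>_. 0) dx chi \<noteq> (\<lambda>_. 0)"
    unfolding dx_def delta_x_def using LeastI_ex[OF exx] .
  have dx2: "dual_idem D q (\<lambda>_. 0) i chi = (\<lambda>_. 0)" if "1 \<le> i" "i < dx" for i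
  proof -
    have "i \<le> D" using that dx1 by simp
    then show ?thesis using not_less_Least[of i "\<lambda>i. i \<noteq> 0 \<and> i \<le> D \<and> dual_idem D q (\<lambda>_. 0) i chi \<noteq> (\<lambda>_. 0)"] that
      unfolding dx_def delta_x_def by auto
  qed
  define ds where "ds = delta_star D q chi"
  have exs: "\<exists>j. j \<noteq> 0 \<and> j \<le> D \<and> prim_idem D q j chi \<noteq> (\<lambda>_. 0)"
  proof (rule ccontr)
    assume nex: "\<not> ?thesis"
    have TTz: "TT F B = 0" if "B \<in> Pow U" "B \<noteq> {}" for B
    proof -
      have "card B \<noteq> 0" using that by (auto simp: card_eq_0_iff finite_subset)
      moreover have "card B \<le> D" using that card_sub_U by auto
      ultimately have "prim_idem D q (card B) chi = (\<lambda>_. 0)" using nex by blast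
      then show ?thesis using tlv that by blast
    qed
    have "TT (TT F) {} = Qc ^ D * F {}" using TT_TT by simp
    moreover have "TT (TT F) {} = TT F {}"
    proof -
      have "TT (TT F) {} = (\<Sum>B\<in>Pow U. TT F B * ww B {})" unfolding TT_def ..
      also have "\<dots> = TT F {} * ww {} {} + (\<Sum>B\<in>Pow U - {{}}. TT F B * ww B {})"
        by (rule sum.remove) auto
      also have "(\<Sum>B\<in>Pow U - {{}}. TT F B * ww B {}) = 0"
        by (rule sum.neutral) (use TTz in auto)
      finally show ?thesis by (simp add: ww_empty)
    qed
    moreover have "TT F {} = of_nat (card Y)"
    proof -
      have "TT F {} = (\<Sum>A\<in>Pow U. F A)" unfolding TT_def by (simp add: ww_empty)
      also have "\<dots> = of_nat (card {y \<in> Y. word_support D y \<in> Pow U})" unfolding F_def by (rule sum_F[OF fY]) simp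
      also have "{y \<in> Y. word_support D y \<in> Pow U} = Y" using supp_sub by auto
      finally show ?thesis .
    qed
    ultimately have eq: "of_nat (card Y) = Qc ^ D * of_nat (card {y \<in> Y. word_support D y = {}})"
      unfolding F_def Fv_def by simp
    have sub0: "{y \<in> Y. word_support D y = {}} \<subseteq> {\<lambda>_. 0}"
    proof
      fix y assume y: "y \<in> {y \<in> Y. word_support D y = {}}"
      then have "y \<in> X" using YX by auto
      have "y i = 0" for i
      proof (cases "i < D")
        case True then show ?thesis using y unfolding word_support_def by auto
      next
        case False then show ?thesis using \<open>y \<in> X\<close> unfolding hamming_space_def by auto
      qed
      then have "y = (\<lambda>_. 0)" by (intro ext) simp
      then show "y \<in> {\<lambda>_. 0}" by simp
    qed
    then have "card {y \<in> Y. word_support D y = {}} \<le> 1"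
      using card_mono[OF _ sub0] by simp
    then consider "card {y \<in> Y. word_support D y = {}} = 0" | "card {y \<in> Y. word_support D y = {}} = 1" by linarith
    then show False
    proof cases
      case 1 then show False using eq cY1 by simp
    next
      case 2
      then have "of_nat (card Y) = (of_nat (q ^ D) :: complex)" using eq by simp
      then have "card Y = q ^ D" by (simp only: of_nat_eq_iff)
      then show False using cY2 card_X by simp
    qed
  qed
  have ds1: "ds \<noteq> 0 \<and> ds \<le> D \<and> prim_idem D q ds chi \<noteq> (\<lambda>_. 0)"
    unfolding ds_def delta_star_def using LeastI_ex[OF exs] .
  have ds2: "prim_idem D q j chi = (\<lambda>_. 0)" if "1 \<le> j" "j < ds" for j
  proof -
    have "j \<le> D" using that ds1 by simp
    then show ?thesis using not_less_Least[of j "\<lambda>j. j \<noteq> 0 \<and> j \<le> D \<and> prim_idem D q j chi \<noteq> (\<lambda>_. 0)"] that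
      unfolding ds_def delta_star_def by auto
  qed
  have H0: "lam ps (antisym ps F) k = 0" if v: "valid ps" and r1: "1 \<le> length ps" and rt: "length ps \<le> t" for ps k
  proof (rule core[OF v r1])
    define r where "r = length ps"
    have rps: "length ps = r" unfolding r_def ..
    have h: "int (card {j. r \<le> j \<and> j \<le> D - r \<and> prim_idem D q j chi \<noteq> (\<lambda>_. 0)}) \<le> int dx - int r
       \<or> int (card {i. r \<le> i \<and> i \<le> D - r \<and> dual_idem D q (\<lambda>_. 0) i chi \<noteq> (\<lambda>_. 0)}) \<le> int ds - int r"
      using hyp r1 rt unfolding r_def dx_def ds_def chi_def by auto
    then show "(\<exists>m. (\<forall>A\<in>Pow U. 1 \<le> card A \<and> card A < length ps + m \<longrightarrow> F A = 0)
        \<and> card {j. length ps \<le> j \<and> j \<le> D - length ps \<and> (\<exists>B\<in>Pow U. card B = j \<and> TT F B \<noteq> 0)} \<le> m)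
     \<or> (\<exists>m. (\<forall>B\<in>Pow U. 1 \<le> card B \<and> card B < length ps + m \<longrightarrow> TT F B = 0)
        \<and> card {i. length ps \<le> i \<and> i \<le> D - length ps \<and> (\<exists>A\<in>Pow U. card A = i \<and> F A \<noteq> 0)} \<le> m)"
    proof
      define J0 where "J0 = {j. r \<le> j \<and> j \<le> D - r \<and> prim_idem D q j chi \<noteq> (\<lambda>_. 0)}"
      assume c1: "int (card {j. r \<le> j \<and> j \<le> D - r \<and> prim_idem D q j chi \<noteq> (\<lambda>_. 0)}) \<le> int dx - int r"
      then have c1': "card J0 + r \<le> dx" unfolding J0_def by linarith
      have fJ0: "finite J0" unfolding J0_def by (rule finite_subset[of _ "{..D}"]) auto
      have sub: "{j. r \<le> j \<and> j \<le> D - r \<and> (\<exists>B\<in>Pow U. card B = j \<and> TT F B \<noteq> 0)} \<subseteq> J0"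
        unfolding J0_def using tlv by blast
      have "(\<forall>A\<in>Pow U. 1 \<le> card A \<and> card A < r + (dx - r) \<longrightarrow> F A = 0)"
        using lvl dx2 c1' by auto
      moreover have "card {j. r \<le> j \<and> j \<le> D - r \<and> (\<exists>B\<in>Pow U. card B = j \<and> TT F B \<noteq> 0)} \<le> dx - r"
        using card_mono[OF fJ0 sub] c1' by simp
      ultimately have "\<exists>m. (\<forall>A\<in>Pow U. 1 \<le> card A \<and> card A < r + m \<longrightarrow> F A = 0)
        \<and> card {j. r \<le> j \<and> j \<le> D - r \<and> (\<exists>B\<in>Pow U. card B = j \<and> TT F B \<noteq> 0)} \<le> m"
        by blast
      then show ?thesis unfolding rps by blast
    next
      define I0 where "I0 = {i. r \<le> i \<and> i \<le> D - r \<and> dual_idem D q (\<lambda>_. 0) i chi \<noteq> (\<lambda>_. 0)}"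
      assume c2: "int (card {i. r \<le> i \<and> i \<le> D - r \<and> dual_idem D q (\<lambda>_. 0) i chi \<noteq> (\<lambda>_. 0)}) \<le> int ds - int r"
      then have c2': "card I0 + r \<le> ds" unfolding I0_def by linarith
      have fI0: "finite I0" unfolding I0_def by (rule finite_subset[of _ "{..D}"]) auto
      have sub: "{i. r \<le> i \<and> i \<le> D - r \<and> (\<exists>A\<in>Pow U. card A = i \<and> F A \<noteq> 0)} \<subseteq> I0"
        unfolding I0_def using lvl by blast
      have "(\<forall>B\<in>Pow U. 1 \<le> card B \<and> card B < r + (ds - r) \<longrightarrow> TT F B = 0)"
        using tlv ds2 c2' by auto
      moreover have "card {i. r \<le> i \<and> i \<le> D - r \<and> (\<exists>A\<in>Pow U. card A = i \<and> F A \<noteq> 0)} \<le> ds - r"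
        using card_mono[OF fI0 sub] c2' by simp
      ultimately have "\<exists>m. (\<forall>B\<in>Pow U. 1 \<le> card B \<and> card B < r + m \<longrightarrow> TT F B = 0)
        \<and> card {i. r \<le> i \<and> i \<le> D - r \<and> (\<exists>A\<in>Pow U. card A = i \<and> F A \<noteq> 0)} \<le> m"
        by blast
      then show ?thesis unfolding rps by blast
    qed
  qed
  have NNc: "NN m [] F S k = of_nat (card {y \<in> Y. hweight D y = k \<and> cnd m S (word_support D y)})" for m S k
  proof -
    have "NN m [] F S k = of_nat (card {y \<in> Y. word_support D y \<in> {A \<in> LL [] k. cnd m S A}})"
      unfolding NN_def F_def by (rule sum_F[OF fY]) (auto simp: LL_def)
    also have "{y \<in> Y. word_support D y \<in> {A \<in> LL [] k. cnd m S A}} = {y \<in> Y. hweight D y = k \<and> cnd m S (word_support D y)}"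
      using supp_sub unfolding LL_def hweight_def by (auto simp: Pset_def al_def)
    finally show ?thesis .
  qed
  have eqc: "card {y \<in> Y. hweight D y = k \<and> cnd m S (word_support D y)} = card {y \<in> Y. hweight D y = k \<and> cnd m S' (word_support D y)}"
    if "S \<subseteq> U" "card S = t" "S' \<subseteq> U" "card S' = t" for m S S' k
    using model_const[OF H0 t1 that, of m k] NNc by (simp only: of_nat_eq_iff)
  show ?thesis
  proof (intro allI impI conjI)
    fix k assume "k \<le> D"
    define S0 where "S0 = {0..<t}"
    have S0: "S0 \<subseteq> U" "card S0 = t" using tD unfolding S0_def by auto
    show "\<exists>c. \<forall>S. S \<subseteq> {0..<D} \<and> card S = t \<longrightarrow> card {y \<in> Y. hweight D y = k \<and> word_support D y \<inter> S = {}} = c"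
    proof (intro exI allI impI)
      fix S assume S: "S \<subseteq> {0..<D} \<and> card S = t"
      show "card {y \<in> Y. hweight D y = k \<and> word_support D y \<inter> S = {}} = card {y \<in> Y. hweight D y = k \<and> cnd True S0 (word_support D y)}"
        using eqc[where m=True and S=S and S'=S0 and k=k] S S0 unfolding cnd_def by simp
    qed
    show "is_t_design {0..<D} t {y \<in> Y. hweight D y = k} (word_support D)"
      unfolding is_t_design_def
    proof (intro allI impI)
      fix T T' assume T: "T \<subseteq> {0..<D} \<and> card T = t \<and> T' \<subseteq> {0..<D} \<and> card T' = t"
      have "card {b \<in> {y \<in> Y. hweight D y = k}. T \<subseteq> word_support D b} = card {y \<in> Y. hweight D y = k \<and> cnd False T (word_support D y)}"
        unfolding cnd_def by (rule arg_cong[where f=card]) auto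
      also have "\<dots> = card {y \<in> Y. hweight D y = k \<and> cnd False T' (word_support D y)}"
        using eqc[where m=False and S=T and S'=T' and k=k] T by simp
      also have "\<dots> = card {b \<in> {y \<in> Y. hweight D y = k}. T' \<subseteq> word_support D b}"
        unfolding cnd_def by (rule arg_cong[where f=card]) auto
      finally show "card {b \<in> {y \<in> Y. hweight D y = k}. T \<subseteq> word_support D b} = card {b \<in> {y \<in> Y. hweight D y = k}. T' \<subseteq> word_support D b}" .
    qed
  qed
qed

end

theorem mainTheorem13:
  fixes D q t :: nat and Y :: "(nat \<Rightarrow> nat) set"
  assumes "D \<ge> 1" and "q \<ge> 2"
    and "Y \<subseteq> hamming_space D q"
    and "1 < card Y" and "card Y < card (hamming_space D q)"
    and "1 \<le> t" and "t \<le> D"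
    and "\<forall>r. 1 \<le> r \<and> r \<le> t \<longrightarrow>
           int (card {j. r \<le> j \<and> j \<le> D - r \<and> prim_idem D q j (char_vec D q Y) \<noteq> (\<lambda>_. 0)})
              \<le> int (delta_x D q (\<lambda>_. 0) (char_vec D q Y)) - int r
         \<or> int (card {i. r \<le> i \<and> i \<le> D - r \<and> dual_idem D q (\<lambda>_. 0) i (char_vec D q Y) \<noteq> (\<lambda>_. 0)})
              \<le> int (delta_star D q (char_vec D q Y)) - int r"
  shows "\<forall>k\<le>D.
           (\<exists>c. \<forall>S. S \<subseteq> {0..<D} \<and> card S = t \<longrightarrow>
              card {y\<in>Y. hweight D y = k \<and> word_support D y \<inter> S = {}} = c)
         \<and> is_t_design {0..<D} t {y\<in>Y. hweight D y = k} (word_support D)"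
proof -
  interpret hm D q by unfold_locales (rule assms(2))
  show ?thesis by (rule main_hm[OF assms(1) assms(3-8)])
qed


end
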